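(* Let $d \geq 1$ be an integer, let $N > 1$ be a composite integer and let $R = \mathbb{Z}/N\mathbb{Z}$. Consider the coefficient-choosing game of degree $d$ over $R$, where Wanda wins if and only if the final polynomial has a root in $R$. Then the player who makes the last move has a winning strategy when (1) $d$ is even, or (2) $d > 1$ and $N$ is cube-free, or (3) $d > 3$ and $N = 16 N_2$ for some cube-free odd integer $N_2$. In all other cases, Wanda has a winning strategy, whether she moves first or second.
   Context: The coefficient-choosing game of degree $d$ over a commutative ring $R$ with unity: two players, Nora and Wanda, alternately choose coefficients of a polynomial $f(x) = a_d x^d + \cdots + a_1 x + a_0$. On each move the player whose turn it is picks one coefficient $a_i$ that has not yet been chosen and assigns it a value in $R$. The leading coefficient $a_d$ and the constant coefficient $a_0$ must be nonzero. The game ends when all $d+1$ coefficients are chosen. Wanda wins if $f$ has a root in the ring of fractions $\operatorname{Frac}(R)$, and Nora wins otherwise. For $R = \mathbb{Z}/N\mathbb{Z}$, $\operatorname{Frac}(R) = R$. Who moves first is fixed in advance, which determines who makes the last (i.e. the $(d+1)$-st) move. "The last player has a winning strategy" means that whichever of the two players makes the last move has a winning strategy. *)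

theory Defs
  imports "HOL-Computational_Algebra.Primes"
begin

text \<open>Elements of Z/NZ are represented by their canonical representatives 0..N-1.
  A game state is a partial assignment of the coefficients a_0..a_d
  (None = not yet chosen).\<close>

definition has_root_mod :: "nat \<Rightarrow> nat \<Rightarrow> (nat \<Rightarrow> nat) \<Rightarrow> bool" where
  "has_root_mod N d a \<longleftrightarrow> (\<exists>x\<in>{0..<N}. (\<Sum>i\<le>d. a i * x ^ i) mod N = 0)"

definition legal_move :: "nat \<Rightarrow> nat \<Rightarrow> (nat \<Rightarrow> nat option) \<Rightarrow> nat \<Rightarrow> nat \<Rightarrow> bool" where
  "legal_move N d c i v \<longleftrightarrow> i \<le> d \<and> c i = None \<and> v < N \<and> ((i = 0 \<or> i = d) \<longrightarrow> v \<noteq> 0)"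

text \<open>wanda_val N d k c w: with k moves remaining from state c, and w = True iff
  Wanda is to move, Wanda has a winning strategy.\<close>
fun wanda_val :: "nat \<Rightarrow> nat \<Rightarrow> nat \<Rightarrow> (nat \<Rightarrow> nat option) \<Rightarrow> bool \<Rightarrow> bool" where
  "wanda_val N d 0 c w = has_root_mod N d (\<lambda>i. the (c i))"
| "wanda_val N d (Suc k) c w =
     (if w then (\<exists>i v. legal_move N d c i v \<and> wanda_val N d k (c(i := Some v)) False)
      else (\<forall>i v. legal_move N d c i v \<longrightarrow> wanda_val N d k (c(i := Some v)) True))"

fun nora_val :: "nat \<Rightarrow> nat \<Rightarrow> nat \<Rightarrow> (nat \<Rightarrow> nat option) \<Rightarrow> bool \<Rightarrow> bool" where
  "nora_val N d 0 c w = (\<not> has_root_mod N d (\<lambda>i. the (c i)))"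
| "nora_val N d (Suc k) c w =
     (if w then (\<forall>i v. legal_move N d c i v \<longrightarrow> nora_val N d k (c(i := Some v)) False)
      else (\<exists>i v. legal_move N d c i v \<and> nora_val N d k (c(i := Some v)) True))"

definition wanda_wins :: "nat \<Rightarrow> nat \<Rightarrow> bool \<Rightarrow> bool" where
  "wanda_wins N d wanda_first = wanda_val N d (d + 1) (\<lambda>_. None) wanda_first"

definition nora_wins :: "nat \<Rightarrow> nat \<Rightarrow> bool \<Rightarrow> bool" where
  "nora_wins N d wanda_first = nora_val N d (d + 1) (\<lambda>_. None) wanda_first"

text \<open>Wanda makes the last, (d+1)-st move iff (Wanda first and d even) or (Nora first and d odd).\<close>
definition last_player_wins :: "nat \<Rightarrow> nat \<Rightarrow> bool \<Rightarrow> bool" where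
  "last_player_wins N d wanda_first =
     (if wanda_first = even d then wanda_wins N d wanda_first else nora_wins N d wanda_first)"

definition cube_free :: "nat \<Rightarrow> bool" where
  "cube_free n \<longleftrightarrow> (\<forall>m. m ^ 3 dvd n \<longrightarrow> m = 1)"

end

theory Submission
  imports Defs "HOL-Number_Theory.Number_Theory"
begin

definition compl :: "(nat \<Rightarrow> nat option) \<Rightarrow> (nat \<Rightarrow> nat) \<Rightarrow> bool" where
  "compl c a \<longleftrightarrow> (\<forall>i v. c i = Some v \<longrightarrow> a i = v)"

definition freeset :: "nat \<Rightarrow> (nat \<Rightarrow> nat option) \<Rightarrow> nat set" where
  "freeset d c = {i. i \<le> d \<and> c i = None}"

definition evi :: "(nat \<Rightarrow> nat) \<Rightarrow> nat \<Rightarrow> int \<Rightarrow> int" where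
  "evi a d x = (\<Sum>i\<le>d. int (a i) * x ^ i)"

lemma finite_freeset[simp]: "finite (freeset d c)"
  unfolding freeset_def by (rule finite_subset[of _ "{..d}"]) auto

lemma legal_free: "legal_move N d c i v \<Longrightarrow> i \<in> freeset d c"
  unfolding legal_move_def freeset_def by auto

lemma freeset_upd: "i \<in> freeset d c \<Longrightarrow> freeset d (c(i := Some v)) = freeset d c - {i}"
  unfolding freeset_def by auto

lemma card_freeset_upd:
  "i \<in> freeset d c \<Longrightarrow> card (freeset d (c(i := Some v))) = card (freeset d c) - 1"
  by (simp add: freeset_upd)

lemma compl_upd: "c i = None \<Longrightarrow> compl (c(i := Some v)) a \<Longrightarrow> compl c a"
  unfolding compl_def by (metis fun_upd_other option.distinct(1))

lemma compl_the: "compl c (\<lambda>i. the (c i))"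
  unfolding compl_def by auto

lemma freeset_empty: "freeset d (\<lambda>_. None) = {..d}"
  unfolding freeset_def by auto

lemma evi_cong: "[x = y] (mod m) \<Longrightarrow> [evi a d x = evi a d y] (mod m)"
  unfolding evi_def by (intro cong_sum cong_mult cong_pow cong_refl) auto

lemma evi_nat: "evi a d (int x) = int (\<Sum>i\<le>d. a i * x ^ i)"
  unfolding evi_def by simp

lemma has_root_mod_iff:
  assumes "N > 0"
  shows "has_root_mod N d a \<longleftrightarrow> (\<exists>x::int. int N dvd evi a d x)"
proof
  assume "has_root_mod N d a"
  then obtain x where "x < N" "(\<Sum>i\<le>d. a i * x ^ i) mod N = 0"
    unfolding has_root_mod_def by auto
  then have "int N dvd int (\<Sum>i\<le>d. a i * x ^ i)" unfolding int_dvd_int_iff by (simp add: mod_eq_0_iff_dvd)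
  then have "int N dvd evi a d (int x)" by (simp only: evi_nat)
  then show "\<exists>x::int. int N dvd evi a d x" by blast
next
  assume "\<exists>x::int. int N dvd evi a d x"
  then obtain x where x: "int N dvd evi a d x" by blast
  define y where "y = x mod int N"
  have y0: "y \<ge> 0" "y < int N" using assms unfolding y_def by auto
  have "[x = y] (mod int N)" unfolding y_def by (simp add: cong_def)
  then have "[evi a d x = evi a d y] (mod int N)" by (rule evi_cong)
  then have "int N dvd evi a d y" using x by (simp add: cong_dvd_iff)
  moreover have "evi a d y = int (\<Sum>i\<le>d. a i * nat y ^ i)"
    using evi_nat[of a d "nat y"] y0 by simp
  ultimately have "int N dvd int (\<Sum>i\<le>d. a i * nat y ^ i)" by simp
  then have "(\<Sum>i\<le>d. a i * nat y ^ i) mod N = 0" unfolding int_dvd_int_iff by (simp add: mod_eq_0_iff_dvd)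
  moreover have "nat y < N" using y0 by simp
  ultimately show "has_root_mod N d a" unfolding has_root_mod_def by (intro bexI[of _ "nat y"]) auto
qed

lemma wanda_by_compl:
  assumes "N > 1" "card (freeset d c) = k" "\<forall>a. compl c a \<longrightarrow> has_root_mod N d a"
  shows "wanda_val N d k c w"
  using assms
proof (induction k arbitrary: c w)
  case 0
  then show ?case using compl_the by simp
next
  case (Suc k c w)
  show ?case
  proof (cases w)
    case True
    from Suc.prems(2) have "freeset d c \<noteq> {}" by auto
    then obtain i where i: "i \<in> freeset d c" by blast
    have lm: "legal_move N d c i 1" using i Suc.prems(1) unfolding legal_move_def freeset_def by auto
    have "wanda_val N d k (c(i := Some 1)) False"
    proof (rule Suc.IH)
      show "card (freeset d (c(i := Some 1))) = k" using Suc.prems(2) card_freeset_upd[OF i] by simp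
      show "\<forall>a. compl (c(i := Some 1)) a \<longrightarrow> has_root_mod N d a"
        using Suc.prems(3) compl_upd[of c i] i unfolding freeset_def by blast
    qed (use Suc.prems in auto)
    then show ?thesis using \<open>w\<close> lm by (simp only: wanda_val.simps if_True) blast
  next
    case False
    have "wanda_val N d k (c(i := Some v)) True" if lm: "legal_move N d c i v" for i v
    proof -
      have i: "i \<in> freeset d c" using legal_free[OF lm] .
      show ?thesis
      proof (rule Suc.IH)
        show "card (freeset d (c(i := Some v))) = k" using Suc.prems(2) card_freeset_upd[OF i] by simp
        show "\<forall>a. compl (c(i := Some v)) a \<longrightarrow> has_root_mod N d a"
          using Suc.prems(3) compl_upd[of c i] i unfolding freeset_def by blast
      qed (use Suc.prems in auto)
    qed
    then show ?thesis using \<open>\<not> w\<close> by (simp only: wanda_val.simps if_False) blast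
  qed
qed


lemma evi_0: "evi a d 0 = int (a 0)"
  unfolding evi_def by (induction d) auto

lemma pigeon:
  assumes p: "prime (p::nat)"
  shows "\<exists>r<p. \<forall>x\<in>{1..<p}. \<not> int p dvd (int r * int x ^ j + S x)"
proof (rule ccontr)
  assume "\<not> ?thesis"
  then have h: "\<forall>r\<in>{..<p}. \<exists>x\<in>{1..<p}. int p dvd (int r * int x ^ j + S x)" by auto
  define g where "g r = (SOME x. x \<in> {1..<p} \<and> int p dvd (int r * int x ^ j + S x))" for r
  have g: "g r \<in> {1..<p} \<and> int p dvd (int r * int (g r) ^ j + S (g r))" if "r < p" for r
  proof -
    have "r \<in> {..<p}" using that by simp
    with h obtain x where "x \<in> {1..<p}" "int p dvd (int r * int x ^ j + S x)" by blast
    then have "\<exists>x. x \<in> {1..<p} \<and> int p dvd (int r * int x ^ j + S x)" by blast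
    then show ?thesis unfolding g_def by (rule someI_ex)
  qed
  have pi: "prime (int p)" using p by simp
  have "inj_on g {..<p}"
  proof (rule inj_onI)
    fix r1 r2 assume r: "r1 \<in> {..<p}" "r2 \<in> {..<p}" "g r1 = g r2"
    define x where "x = g r1"
    have g1: "x \<in> {1..<p}" "int p dvd (int r1 * int x ^ j + S x)" using g[of r1] r unfolding x_def by auto
    have g2: "int p dvd (int r2 * int x ^ j + S x)" using g[of r2] r unfolding x_def by auto
    have "int p dvd (int r1 * int x ^ j + S x) - (int r2 * int x ^ j + S x)"
      using g1(2) g2 by (rule dvd_diff)
    then have "int p dvd (int r1 - int r2) * int x ^ j" by (simp add: algebra_simps)
    moreover have "\<not> int p dvd int x"
    proof
      assume "int p dvd int x"
      then have "p dvd x" by simp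
      then show False using g1(1) by (auto dest: dvd_imp_le)
    qed
    then have "\<not> int p dvd int x ^ j" using pi prime_dvd_power by blast
    ultimately have dv: "int p dvd int r1 - int r2" using pi prime_dvd_mult_iff by blast
    show "r1 = r2"
    proof (rule ccontr)
      assume "r1 \<noteq> r2"
      then have "int r1 - int r2 \<noteq> 0" by simp
      from dvd_imp_le_int[OF this dv] have "int p \<le> \<bar>int r1 - int r2\<bar>" by simp
      then show False using r by auto
    qed
  qed
  then have "card {..<p} \<le> card {1..<p}"
    by (rule card_inj_on_le) (use g in auto)
  then show False using prime_gt_0_nat[OF p] by simp
qed

lemma nora_final:
  assumes p: "prime p" "p dvd N" "p < N" and fr: "freeset d c = {j}"
    and G: "\<forall>a. compl c a \<longrightarrow> (\<forall>x::int. int p dvd x \<longrightarrow> \<not> int N dvd evi a d x)"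
  shows "\<exists>v. legal_move N d c j v \<and> \<not> has_root_mod N d (\<lambda>i. the ((c(j := Some v)) i))"
proof -
  have j: "j \<le> d" "c j = None" using fr unfolding freeset_def by auto
  have j0: "j \<noteq> 0"
  proof
    assume j0: "j = 0"
    define a where "a i = (if i = 0 then 0 else the (c i))" for i
    have "compl c a" unfolding compl_def a_def using j j0 by auto
    then have "\<not> int N dvd evi a d 0" using G by auto
    then show False by (simp add: evi_0 a_def)
  qed
  define S where "S y = (\<Sum>i\<in>{..d}-{j}. int (the (c i)) * y ^ i)" for y :: int
  obtain r where r: "r < p" "\<forall>x\<in>{1..<p}. \<not> int p dvd (int r * int x ^ j + S (int x))"
    using pigeon[OF p(1), of j "\<lambda>x. S (int x)"] by blast
  define v where "v = (if r = 0 \<and> j = d then p else r)"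
  have vp: "[int v = int r] (mod int p)" unfolding v_def by (auto simp: cong_def)
  have p0: "p > 0" using prime_gt_0_nat[OF p(1)] .
  have lm: "legal_move N d c j v"
    unfolding legal_move_def v_def using j j0 r p p0 by auto
  define a' where "a' i = the ((c(j := Some v)) i)" for i
  have ca: "compl c a'" unfolding compl_def a'_def using j by auto
  have ev: "evi a' d x = int v * x ^ j + S x" for x
  proof -
    have "evi a' d x = int (a' j) * x ^ j + (\<Sum>i\<in>{..d}-{j}. int (a' i) * x ^ i)"
      unfolding evi_def using j by (subst sum.remove[of "{..d}" j]) auto
    moreover have "(\<Sum>i\<in>{..d}-{j}. int (a' i) * x ^ i) = S x"
      unfolding S_def a'_def by (rule sum.cong) auto
    ultimately show ?thesis by (simp add: a'_def)
  qed
  have "\<not> int N dvd evi a' d x" for x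
  proof (cases "int p dvd x")
    case True
    then show ?thesis using G ca by blast
  next
    case False
    show ?thesis
    proof
      assume "int N dvd evi a' d x"
      then have dv: "int p dvd evi a' d x" using p(2) by (meson dvd_trans int_dvd_int_iff)
      define x' where "x' = nat (x mod int p)"
      have m: "0 \<le> x mod int p" "x mod int p < int p" "x mod int p \<noteq> 0"
        using p0 False by (auto simp: dvd_eq_mod_eq_0)
      have x'1: "x' \<in> {1..<p}" unfolding x'_def using m by auto
      have xc: "[x = int x'] (mod int p)" unfolding x'_def using p0 by (simp add: cong_def)
      have "[evi a' d x = evi a' d (int x')] (mod int p)" using xc by (rule evi_cong)
      also have "evi a' d (int x') = int v * int x' ^ j + S (int x')" by (rule ev)
      also have "[\<dots> = int r * int x' ^ j + S (int x')] (mod int p)"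
        by (intro cong_add cong_mult vp cong_refl)
      finally have "int p dvd int r * int x' ^ j + S (int x')" using dv by (simp add: cong_dvd_iff)
      then show False using r(2) x'1 by blast
    qed
  qed
  then have "\<not> has_root_mod N d a'" using has_root_mod_iff[of N d a'] p by auto
  then show ?thesis using lm unfolding a'_def by blast
qed

lemma nora_pigeon:
  assumes p: "prime p" "p dvd N" "p < N"
    and "card (freeset d c) = k" "k \<ge> 1" "w = even k"
    and "\<forall>a. compl c a \<longrightarrow> (\<forall>x::int. int p dvd x \<longrightarrow> \<not> int N dvd evi a d x)"
  shows "nora_val N d k c w"
  using assms(4-7)
proof (induction k arbitrary: c w)
  case 0
  then show ?case by simp
next
  case (Suc k c w)
  have N1: "N > 1" using p prime_gt_1_nat by (meson dual_order.strict_trans1 less_imp_le)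
  have step: "card (freeset d (c(i := Some v))) = k \<and>
      (\<forall>a. compl (c(i := Some v)) a \<longrightarrow> (\<forall>x::int. int p dvd x \<longrightarrow> \<not> int N dvd evi a d x))"
    if i: "i \<in> freeset d c" for i v
    using Suc.prems(1,4) card_freeset_upd[OF i] compl_upd[of c i] i unfolding freeset_def by auto
  show ?case
  proof (cases w)
    case True
    have "nora_val N d k (c(i := Some v)) False" if lm: "legal_move N d c i v" for i v
    proof -
      note s = step[OF legal_free[OF lm], of v]
      have k1: "k \<ge> 1" using Suc.prems True by (cases k) auto
      have e: "False = even k" using Suc.prems True by auto
      show ?thesis using Suc.IH[OF conjunct1[OF s] k1 e conjunct2[OF s]] .
    qed
    then show ?thesis using \<open>w\<close> by (simp only: nora_val.simps if_True) blast
  next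
    case False
    show ?thesis
    proof (cases "k = 0")
      case True
      then obtain j where fr: "freeset d c = {j}" using Suc.prems(1) card_1_singletonE by auto
      obtain v where "legal_move N d c j v" "\<not> has_root_mod N d (\<lambda>i. the ((c(j := Some v)) i))"
        using nora_final[OF p fr] Suc.prems(4) by blast
      then show ?thesis using True \<open>\<not> w\<close> by (simp only: nora_val.simps if_False) auto
    next
      case False
      from Suc.prems(1) have "freeset d c \<noteq> {}" by auto
      then obtain i where i: "i \<in> freeset d c" by blast
      have lm: "legal_move N d c i 1" using i N1 unfolding legal_move_def freeset_def by auto
      note s = step[OF i, of 1]
      have k1: "k \<ge> 1" using False by simp
      have e: "True = even k" using Suc.prems \<open>\<not> w\<close> by auto
      have "nora_val N d k (c(i := Some 1)) True"
        using Suc.IH[OF conjunct1[OF s] k1 e conjunct2[OF s]] .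
      then show ?thesis using \<open>\<not> w\<close> lm by (simp only: nora_val.simps if_False) blast
    qed
  qed
qed


lemma evi_split:
  assumes "m \<le> Suc d"
  shows "evi a d x = (\<Sum>i<m. int (a i) * x ^ i) + (\<Sum>i\<in>{m..d}. int (a i) * x ^ i)"
proof -
  have "{..d} = {..<m} \<union> {m..d}" using assms by auto
  then show ?thesis unfolding evi_def by (subst sum.union_disjoint[symmetric]) auto
qed

lemma evi_mod:
  assumes "m \<le> Suc d" "M dvd x ^ m"
  shows "[evi a d x = (\<Sum>i<m. int (a i) * x ^ i)] (mod M)"
proof -
  have "M dvd (\<Sum>i\<in>{m..d}. int (a i) * x ^ i)"
  proof (rule dvd_sum)
    fix i assume "i \<in> {m..d}"
    then have "x ^ i = x ^ m * x ^ (i - m)" by (simp add: power_add[symmetric])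
    then show "M dvd int (a i) * x ^ i" using assms(2) by simp
  qed
  then obtain t where t: "(\<Sum>i\<in>{m..d}. int (a i) * x ^ i) = M * t" by (elim dvdE)
  then show ?thesis using evi_split[OF assms(1), of a x]
    by (simp add: cong_def)
qed

lemma wanda_final:
  assumes "N > 1" "freeset d c = {j}" "c 0 \<noteq> None" "c d \<noteq> None"
  shows "\<exists>v. legal_move N d c j v \<and> has_root_mod N d (\<lambda>i. the ((c(j := Some v)) i))"
proof -
  have j: "j \<le> d" "c j = None" using assms(2) unfolding freeset_def by auto
  have j0: "j \<noteq> 0" "j \<noteq> d" using j(2) assms(3,4) by (metis, metis)
  define S where "S = (\<Sum>i\<in>{..d}-{j}. int (the (c i)))"
  define v where "v = nat ((- S) mod int N)"
  have vv: "int v = (- S) mod int N" unfolding v_def using assms(1) by simp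
  have "int v < int N" using vv assms(1) by simp
  then have lm: "legal_move N d c j v" unfolding legal_move_def using j j0 by auto
  define a' where "a' i = the ((c(j := Some v)) i)" for i
  have e1: "evi a' d 1 = int (a' j) + (\<Sum>i\<in>{..d}-{j}. int (a' i))"
    unfolding evi_def using j by (subst sum.remove[of "{..d}" j]) auto
  have e2: "(\<Sum>i\<in>{..d}-{j}. int (a' i)) = S"
    unfolding S_def a'_def by (rule sum.cong) auto
  have e3: "a' j = v" unfolding a'_def by simp
  have "evi a' d 1 = int v + S" using e1 e2 e3 by simp
  then have "int N dvd evi a' d 1" using vv
    by (simp add: mod_eq_0_iff_dvd[symmetric]) (metis add.commute mod_add_right_eq add.right_inverse mod_0)
  then have "has_root_mod N d a'" using has_root_mod_iff[of N d a'] assms(1) by auto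
  then show ?thesis using lm unfolding a'_def by blast
qed

lemma wanda_last:
  assumes "N > 1" "card (freeset d c) = k" "k \<ge> 1" "w = odd k" "c 0 \<noteq> None" "c d \<noteq> None"
  shows "wanda_val N d k c w"
  using assms(2-6)
proof (induction k arbitrary: c w)
  case 0
  then show ?case by simp
next
  case (Suc k c w)
  have step: "card (freeset d (c(i := Some v))) = k \<and> (c(i := Some v)) 0 \<noteq> None \<and> (c(i := Some v)) d \<noteq> None"
    if i: "i \<in> freeset d c" for i v
    using Suc.prems card_freeset_upd[OF i] by auto
  show ?case
  proof (cases w)
    case False
    have "wanda_val N d k (c(i := Some v)) True" if lm: "legal_move N d c i v" for i v
    proof -
      note s = step[OF legal_free[OF lm], of v]
      have k1: "k \<ge> 1" using Suc.prems False by (cases k) auto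
      have e: "True = odd k" using Suc.prems False by auto
      show ?thesis using Suc.IH[OF conjunct1[OF s] k1 e] s by blast
    qed
    then show ?thesis using \<open>\<not> w\<close> by (simp only: wanda_val.simps if_False) blast
  next
    case True
    show ?thesis
    proof (cases "k = 0")
      case True
      then obtain j where fr: "freeset d c = {j}" using Suc.prems(1) card_1_singletonE by auto
      obtain v where "legal_move N d c j v" "has_root_mod N d (\<lambda>i. the ((c(j := Some v)) i))"
        using wanda_final[OF assms(1) fr] Suc.prems by blast
      then show ?thesis using True \<open>w\<close> by (simp only: wanda_val.simps if_True) auto
    next
      case False
      from Suc.prems(1) have "freeset d c \<noteq> {}" by auto
      then obtain i where i: "i \<in> freeset d c" by blast
      have lm: "legal_move N d c i 1" using i assms(1) unfolding legal_move_def freeset_def by auto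
      note s = step[OF i, of 1]
      have k1: "k \<ge> 1" using False by simp
      have e: "False = odd k" using Suc.prems \<open>w\<close> by auto
      have "wanda_val N d k (c(i := Some 1)) False"
        using Suc.IH[OF conjunct1[OF s] k1 e] s by blast
      then show ?thesis using \<open>w\<close> lm by (simp only: wanda_val.simps if_True) blast
    qed
  qed
qed

type_synonym st = "nat \<Rightarrow> nat option"

abbreviation Gp :: "nat \<Rightarrow> nat \<Rightarrow> nat \<Rightarrow> st \<Rightarrow> bool" where
  "Gp N d p c \<equiv> (\<forall>a. compl c a \<longrightarrow> (\<forall>x::int. int p dvd x \<longrightarrow> \<not> int N dvd evi a d x))"

lemma G_B:
  assumes "c 0 = Some A" "\<not> p dvd A" "p dvd N"
  shows "Gp N d p c"
proof (intro allI impI)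
  fix a x assume ca: "compl c a" and px: "int p dvd x"
  have a0: "a 0 = A" using ca assms(1) unfolding compl_def by auto
  have "[x = 0] (mod int p)" using px by (simp add: cong_def dvd_eq_mod_eq_0)
  then have "[evi a d x = evi a d 0] (mod int p)" by (rule evi_cong)
  then have c1: "[evi a d x = int A] (mod int p)" by (simp add: evi_0 a0)
  show "\<not> int N dvd evi a d x"
  proof
    assume "int N dvd evi a d x"
    then have "int p dvd evi a d x" using assms(3) by (meson dvd_trans int_dvd_int_iff)
    then have "int p dvd int A" using c1 by (simp add: cong_dvd_iff)
    then show False using assms(2) by simp
  qed
qed

lemma G_C:
  assumes "c 0 = Some A" "c 1 = Some 0" "q^2 dvd N" "\<not> q^2 dvd A" "d \<ge> 1"
  shows "Gp N d q c"
proof (intro allI impI)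
  fix a x assume ca: "compl c a" and px: "int q dvd x"
  have a0: "a 0 = A" "a 1 = 0" using ca assms(1,2) unfolding compl_def by auto
  have "int q ^ 2 dvd x ^ 2" using px by (simp add: dvd_power_same)
  then have "[evi a d x = (\<Sum>i<2. int (a i) * x ^ i)] (mod (int q ^ 2))"
    using assms(5) by (intro evi_mod) auto
  moreover have "a (Suc 0) = 0" using a0 by simp
  ultimately have c1: "[evi a d x = int A] (mod (int q ^ 2))" by (simp add: a0 numeral_2_eq_2)
  show "\<not> int N dvd evi a d x"
  proof
    assume "int N dvd evi a d x"
    then have "int q ^ 2 dvd evi a d x" using assms(3)
      by (metis dvd_trans int_dvd_int_iff of_nat_power)
    then have "int (q ^ 2) dvd int A" using c1 by (simp add: cong_dvd_iff)
    then show False using assms(4) by (simp only: int_dvd_int_iff)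
  qed
qed

lemma G_D:
  assumes "c 0 = Some A" "c 1 = Some 0" "16 dvd N" "\<not> 16 dvd A" "d \<ge> 3"
    and H: "\<forall>a. compl c a \<longrightarrow> \<not> (16::int) dvd int A + 4 * int (a 2) + 8 * int (a 3)"
  shows "Gp N d 2 c"
proof (intro allI impI)
  fix a x assume ca: "compl c a" and px: "int 2 dvd x"
  have a0: "a 0 = A" "a 1 = 0" using ca assms(1,2) unfolding compl_def by auto
  obtain y where y: "x = 2 * y" using px by auto
  have "(16::int) dvd x ^ 4" using y by (simp add: power_mult_distrib)
  then have "[evi a d x = (\<Sum>i<4. int (a i) * x ^ i)] (mod 16)"
    using assms(5) by (intro evi_mod) auto
  moreover have "a (Suc 0) = 0" using a0 by simp
  ultimately have c1: "[evi a d x = int A + int (a 2) * x^2 + int (a 3) * x^3] (mod 16)"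
    by (simp add: a0 numeral_eq_Suc)
  show "\<not> int N dvd evi a d x"
  proof
    assume "int N dvd evi a d x"
    then have "(16::int) dvd evi a d x" using assms(3)
      by (metis dvd_trans int_dvd_int_iff of_nat_numeral)
    then have dv: "(16::int) dvd int A + int (a 2) * x^2 + int (a 3) * x^3" using c1 by (simp add: cong_dvd_iff)
    show False
    proof (cases "even y")
      case True
      then obtain z where z: "y = 2 * z" by auto
      have "int A + int (a 2) * x^2 + int (a 3) * x^3 = int A + 16 * (int (a 2) * z^2 + 4 * int (a 3) * z^3)"
        using y z by (simp add: algebra_simps power_mult_distrib)
      then have "(16::int) dvd int A" using dv by (metis dvd_add_left_iff dvd_triv_left add.commute)
      then show False using assms(4) by presburger
    next
      case False
      then obtain z where z: "y = 2 * z + 1" using oddE by blast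
      have "int A + int (a 2) * x^2 + int (a 3) * x^3 = (int A + 4 * int (a 2) + 8 * int (a 3))
          + 16 * (int (a 2) * (z^2 + z) + int (a 3) * (4*z^3 + 6*z^2 + 3*z))"
        using y z by (simp add: algebra_simps power2_eq_square power3_eq_cube)
      then have "(16::int) dvd int A + 4 * int (a 2) + 8 * int (a 3)" using dv
        by (metis dvd_add_left_iff dvd_triv_left add.commute)
      then show False using H ca by blast
    qed
  qed
qed


lemma wv_T: "legal_move N d c i v \<Longrightarrow> wanda_val N d k (c(i := Some v)) False \<Longrightarrow> wanda_val N d (Suc k) c True"
  by auto
lemma wv_F: "(\<And>i v. legal_move N d c i v \<Longrightarrow> wanda_val N d k (c(i := Some v)) True) \<Longrightarrow> wanda_val N d (Suc k) c False"
  by auto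
lemma nv_F: "legal_move N d c i v \<Longrightarrow> nora_val N d k (c(i := Some v)) True \<Longrightarrow> nora_val N d (Suc k) c False"
  by auto
lemma nv_T: "(\<And>i v. legal_move N d c i v \<Longrightarrow> nora_val N d k (c(i := Some v)) False) \<Longrightarrow> nora_val N d (Suc k) c True"
  by auto

lemma card_after: "legal_move N d c i v \<Longrightarrow> card (freeset d (c(i:=Some v))) = card (freeset d c) - 1"
  using card_freeset_upd legal_free by blast

lemma card_s0: "card (freeset d (\<lambda>_. None)) = Suc d"
  by (simp add: freeset_empty)

lemma final_sum:
  assumes "N > 0" "int N dvd (\<Sum>i\<le>d. int (the (c i)))"
  shows "wanda_val N d 0 c w"
proof -
  have "evi (\<lambda>i. the (c i)) d 1 = (\<Sum>i\<le>d. int (the (c i)))" unfolding evi_def by simp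
  then have "has_root_mod N d (\<lambda>i. the (c i))" using has_root_mod_iff[OF assms(1)] assms(2) by metis
  then show ?thesis by simp
qed

lemma WL_even:
  assumes "N > 1" "even d" "d \<ge> 2"
  shows "wanda_wins N d True"
proof (cases "d = 2")
  case True
  let ?c1 = "(\<lambda>_. None)(1 := Some 0) :: st"
  have l1: "legal_move N d (\<lambda>_. None) 1 0" using assms True unfolding legal_move_def by auto
  have "wanda_val N 2 (Suc (Suc 0)) ?c1 False"
  proof (rule wv_F)
    fix i v assume lm: "legal_move N 2 ?c1 i v"
    then have i: "i = 0 \<or> i = 2" "v > 0" "v < N" unfolding legal_move_def by (auto split: if_splits)
    let ?c2 = "?c1(i := Some v)"
    have l2: "legal_move N 2 ?c2 (2 - i) (N - v)" using i unfolding legal_move_def by auto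
    have "wanda_val N 2 0 (?c2(2 - i := Some (N - v))) False"
      apply (rule final_sum) using assms(1) i by (auto simp: numeral_eq_Suc)
    then show "wanda_val N 2 (Suc 0) ?c2 True" by (rule wv_T[OF l2])
  qed
  moreover have "legal_move N 2 (\<lambda>_. None) 1 0" using l1 True by simp
  ultimately have "wanda_val N 2 (Suc (Suc (Suc 0))) (\<lambda>_. None) True" by (intro wv_T)
  then show ?thesis unfolding wanda_wins_def using True by (simp add: numeral_eq_Suc)
next
  case False
  then have d4: "d \<ge> 4" using assms by presburger
  let ?c1 = "(\<lambda>_. None)(0 := Some 1) :: st"
  have l1: "legal_move N d (\<lambda>_. None) 0 1" using assms unfolding legal_move_def by auto
  have c1: "card (freeset d ?c1) = d" using card_after[OF l1] card_s0 by simp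
  obtain d' where d': "d = Suc d'" using d4 by (cases d) auto
  have "wanda_val N d d ?c1 False"
    unfolding d'
  proof (rule wv_F)
    fix i v assume lm: "legal_move N (Suc d') ?c1 i v"
    let ?c2 = "?c1(i := Some v)"
    have i0: "i \<noteq> 0" using lm unfolding legal_move_def by (auto split: if_splits)
    have c2: "card (freeset d ?c2) = d - 1" using card_after[OF lm[folded d']] c1 by simp
    show "wanda_val N (Suc d') d' ?c2 True"
    proof (cases "i = d")
      case True
      show ?thesis using wanda_last[OF assms(1) c2[unfolded d'], of True] d4 assms(2) True i0
        unfolding d' by auto
    next
      case False
      have l2: "legal_move N d ?c2 d 1" using False assms i0 d4 unfolding legal_move_def by auto
      have c3: "card (freeset d (?c2(d := Some 1))) = d - 2" using card_after[OF l2] c2 by simp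
      obtain d'' where d'': "d' = Suc d''" using d4 d' by (cases d') auto
      have "wanda_val N d d'' (?c2(d := Some 1)) False"
        using wanda_last[OF assms(1) c3, of False] d4 assms(2) d' d'' by auto
      then have "wanda_val N d (Suc d'') ?c2 True" by (rule wv_T[OF l2])
      then show ?thesis using d' d'' by blast
    qed
  qed
  then show ?thesis unfolding wanda_wins_def Suc_eq_plus1[symmetric] by (rule wv_T[OF l1])
qed


lemma Nora_B:
  assumes "prime p" "p dvd N" "p < N" "even d" "d \<ge> 2"
  shows "nora_wins N d False"
proof -
  let ?c1 = "(\<lambda>_. None)(0 := Some 1) :: st"
  have N1: "N > 1" using assms prime_gt_1_nat by (meson less_trans)
  have l1: "legal_move N d (\<lambda>_. None) 0 1" using N1 unfolding legal_move_def by auto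
  have c1: "card (freeset d ?c1) = d" using card_after[OF l1] card_s0 by simp
  have "nora_val N d d ?c1 True"
    using nora_pigeon[OF assms(1-3) c1] assms G_B[of ?c1 1 p N d] prime_nat_iff by auto
  then show ?thesis unfolding nora_wins_def Suc_eq_plus1[symmetric] by (rule nv_F[OF l1])
qed

lemma WL_odd:
  assumes "N > 1" "odd d"
  shows "wanda_wins N d False"
proof -
  have "d \<noteq> 0" "d \<noteq> 2" "d \<noteq> 4" using assms(2) by (auto dest: odd_pos)
  then have "d = 1 \<or> d = 3 \<or> d \<ge> 5" by linarith
  then consider "d = 1" | "d = 3" | "d \<ge> 5" by blast
  then show ?thesis
  proof cases
    case 1
    have "wanda_val N 1 (Suc (Suc 0)) (\<lambda>_. None) False"
    proof (rule wv_F)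
      fix i v assume lm: "legal_move N 1 (\<lambda>_. None) i v"
      then have i: "i = 0 \<or> i = 1" "v > 0" "v < N" unfolding legal_move_def by auto
      let ?c2 = "((\<lambda>_. None)(i := Some v)) :: st"
      have l2: "legal_move N 1 ?c2 (1 - i) (N - v)" using i unfolding legal_move_def by auto
      have "wanda_val N 1 0 (?c2(1 - i := Some (N - v))) False"
        apply (rule final_sum) using assms(1) i by auto
      then show "wanda_val N 1 (Suc 0) ?c2 True" by (rule wv_T[OF l2])
    qed
    then show ?thesis unfolding wanda_wins_def using 1 by (simp add: numeral_eq_Suc)
  next
    case 2
    have "wanda_val N 3 (Suc (Suc (Suc (Suc 0)))) (\<lambda>_. None) False"
    proof (rule wv_F)
      fix i v assume lm: "legal_move N 3 (\<lambda>_. None) i v"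
      let ?c2 = "((\<lambda>_. None)(i := Some v)) :: st"
      have c2: "card (freeset 3 ?c2) = 3" using card_after[OF lm] card_s0 by simp
      show "wanda_val N 3 (Suc (Suc (Suc 0))) ?c2 True"
      proof (cases "i = 0 \<or> i = 3")
        case True
        have l2: "legal_move N 3 ?c2 (3 - i) 1" using True assms(1) unfolding legal_move_def by auto
        have c3: "card (freeset 3 (?c2(3 - i := Some 1))) = 2" using card_after[OF l2] c2 by simp
        have "wanda_val N 3 2 (?c2(3 - i := Some 1)) False"
          using wanda_last[OF assms(1) c3, of False] True by auto
        then show ?thesis using wv_T[OF l2, of 2] by (simp add: numeral_eq_Suc)
      next
        case False
        then have i: "i = 1 \<or> i = 2" "v < N" using lm unfolding legal_move_def by auto
        define u where "u = (N - v) mod N"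
        have u1: "u < N" unfolding u_def using assms(1) by simp
        have u2: "int N dvd int v + int u"
        proof (cases "v = 0")
          case True
          then show ?thesis unfolding u_def by simp
        next
          case False
          then have "u = N - v" unfolding u_def using i by simp
          then have "int v + int u = int N" using i by simp
          then show ?thesis by simp
        qed
        note u = u1 u2
        let ?c3 = "?c2(3 - i := Some u)"
        have l2: "legal_move N 3 ?c2 (3 - i) u" using i u unfolding legal_move_def by auto
        have "wanda_val N 3 (Suc (Suc 0)) ?c3 False"
        proof (rule wv_F)
          fix i' v' assume lm': "legal_move N 3 ?c3 i' v'"
          then have i': "i' = 0 \<or> i' = 3" "v' > 0" "v' < N" using i unfolding legal_move_def
            by (auto split: if_splits)
          let ?c4 = "?c3(i' := Some v')"
          have l3: "legal_move N 3 ?c4 (3 - i') (N - v')" using i' i unfolding legal_move_def by auto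
          have s4: "(\<Sum>j\<le>3. g j) = g 0 + g 1 + g 2 + g 3" for g :: "nat \<Rightarrow> int"
            by (simp add: numeral_3_eq_3 numeral_2_eq_2)
          have s: "(\<Sum>j\<le>3. int (the ((?c4(3 - i' := Some (N - v'))) j))) = (int v + int u) + (int v' + int (N - v'))"
            unfolding s4 using i(1) i'(1) by (elim disjE) simp_all
          have "int N dvd (\<Sum>j\<le>3. int (the ((?c4(3 - i' := Some (N - v'))) j)))"
            unfolding s using u i' by (simp add: of_nat_diff)
          then have "wanda_val N 3 0 (?c4(3 - i' := Some (N - v'))) False"
            using assms(1) by (intro final_sum) auto
          then show "wanda_val N 3 (Suc 0) ?c4 True" by (rule wv_T[OF l3])
        qed
        then show ?thesis by (rule wv_T[OF l2])
      qed
    qed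
    then show ?thesis unfolding wanda_wins_def using 2 by (simp add: numeral_eq_Suc)
  next
    case 3
    obtain d' where d': "d = Suc d'" using 3 by (cases d) auto
    have "wanda_val N d (Suc d) (\<lambda>_. None) False"
    proof (rule wv_F)
      fix i v assume lm: "legal_move N d (\<lambda>_. None) i v"
      let ?c2 = "((\<lambda>_. None)(i := Some v)) :: st"
      have c2: "card (freeset d ?c2) = d" using card_after[OF lm] card_s0 by simp
      show "wanda_val N d d ?c2 True"
      proof (cases "i = 0 \<or> i = d")
        case True
        define j where "j = (if i = 0 then d else 0)"
        have l2: "legal_move N d ?c2 j 1" using True assms(1) 3 unfolding legal_move_def j_def by auto
        have c3: "card (freeset d (?c2(j := Some 1))) = d - 1" using card_after[OF l2] c2 by simp
        have "wanda_val N d d' (?c2(j := Some 1)) False"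
          using wanda_last[OF assms(1) c3, of False] True 3 assms(2) d' unfolding j_def by auto
        then show ?thesis unfolding d' by (rule wv_T[OF l2[unfolded d']])
      next
        case False
        have l2: "legal_move N d ?c2 0 1" using False assms(1) 3 unfolding legal_move_def by auto
        let ?c3 = "?c2(0 := Some 1)"
        have c3: "card (freeset d ?c3) = d - 1" using card_after[OF l2] c2 by simp
        obtain d'' where d'': "d' = Suc d''" using 3 d' by (cases d') auto
        have "wanda_val N d (Suc d'') ?c3 False"
        proof (rule wv_F)
          fix i' v' assume lm': "legal_move N d ?c3 i' v'"
          let ?c4 = "?c3(i' := Some v')"
          have c4: "card (freeset d ?c4) = d - 2" using card_after[OF lm'] c3 by simp
          have i'0: "i' \<noteq> 0" using lm' unfolding legal_move_def by (auto split: if_splits)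
          show "wanda_val N d d'' ?c4 True"
          proof (cases "i' = d")
            case True
            show ?thesis using wanda_last[OF assms(1) c4, of True] True 3 assms(2) d' d'' by auto
          next
            case False
            have l3: "legal_move N d ?c4 d 1" using False \<open>\<not> (i = 0 \<or> i = d)\<close> assms(1) 3 i'0
              unfolding legal_move_def by auto
            have c5: "card (freeset d (?c4(d := Some 1))) = d - 3" using card_after[OF l3] c4 by simp
            obtain d3 where d3: "d'' = Suc d3" using 3 d' d'' by (cases d'') auto
            have "wanda_val N d d3 (?c4(d := Some 1)) False"
              using wanda_last[OF assms(1) c5, of False] 3 assms(2) d' d'' d3 by auto
            then have "wanda_val N d (Suc d3) ?c4 True" by (rule wv_T[OF l3])
            then show ?thesis using d3 by blast
          qed
        qed
        then have "wanda_val N d (Suc (Suc d'')) ?c2 True" by (rule wv_T[OF l2])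
        then show ?thesis using d' d'' by blast
      qed
    qed
    then show ?thesis unfolding wanda_wins_def by simp
  qed
qed


lemma prime_factor_lt:
  fixes q N :: nat
  assumes "N > 1" "\<not> prime N" "prime q" "q dvd N"
  shows "q < N"
proof -
  have "q \<le> N" by (rule dvd_imp_le[OF assms(4)]) (use assms(1) in simp)
  moreover have "q \<noteq> N" using assms(2,3) by auto
  ultimately show ?thesis by simp
qed

lemma Nora_CD:
  assumes N: "N > 1" "\<not> prime N" and d: "odd d" "d \<ge> 3"
    and H: "\<And>A. 0 < A \<Longrightarrow> A < N \<Longrightarrow> (\<exists>q. prime q \<and> q dvd N \<and> \<not> q dvd A) \<or>
              (\<exists>q. prime q \<and> q^2 dvd N \<and> \<not> q^2 dvd A) \<or>
              (d \<ge> 5 \<and> 16 dvd N \<and> 4 dvd A \<and> \<not> 16 dvd A)"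
  shows "nora_wins N d True"
proof -
  have "N \<noteq> 1" using N by simp
  then obtain p where p: "prime p" "p dvd N" using prime_factor_nat by blast
  have pN: "p < N" using prime_factor_lt[OF N p] .
  obtain d' where d': "d = Suc d'" using d by (cases d) auto
  have "nora_val N d (Suc d) (\<lambda>_. None) True"
  proof (rule nv_T)
    fix i v assume lm: "legal_move N d (\<lambda>_. None) i v"
    let ?c1 = "((\<lambda>_. None)(i := Some v)) :: st"
    have c1: "card (freeset d ?c1) = d" using card_after[OF lm] card_s0 by simp
    show "nora_val N d d ?c1 False"
    proof (cases "i = 0")
      case False
      have l2: "legal_move N d ?c1 0 1" using False N unfolding legal_move_def by auto
      let ?c2 = "?c1(0 := Some 1)"
      have c2: "card (freeset d ?c2) = d'" using card_after[OF l2] c1 d' by simp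
      have d'1: "d' \<ge> 1" "True = even d'" using d d' by auto
      have "\<not> p dvd 1" using p(1) by (simp add: prime_nat_iff)
      then have "Gp N d p ?c2" using G_B[of ?c2 1 p N d] p(2) by simp
      then have "nora_val N d d' ?c2 True"
        using nora_pigeon[OF p pN c2 d'1] by blast
      then show ?thesis unfolding d' by (rule nv_F[OF l2[unfolded d']])
    next
      case True
      note i0 = True
      define A where "A = v"
      have A: "0 < A" "A < N" using lm True unfolding legal_move_def A_def by auto
      have l2: "legal_move N d ?c1 1 0" using True N d unfolding legal_move_def by auto
      let ?c2 = "?c1(1 := Some 0)"
      have c2: "card (freeset d ?c2) = d'" using card_after[OF l2] c1 d' by simp
      have c20: "?c2 0 = Some A" "?c2 1 = Some 0" using True A_def by auto
      have d'1: "d' \<ge> 1" "True = even d'" using d d' by auto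
      have "nora_val N d d' ?c2 True"
      proof -
        consider (a) q where "prime q" "q dvd N" "\<not> q dvd A"
          | (b) q where "prime q" "q^2 dvd N" "\<not> q^2 dvd A"
          | (c) "d \<ge> 5" "16 dvd N" "4 dvd A" "\<not> 16 dvd A"
          using H[OF A] by blast
        then show ?thesis
        proof cases
          case (a q)
          show ?thesis using nora_pigeon[OF a(1,2) prime_factor_lt[OF N a(1,2)] c2 d'1]
            G_B[of ?c2 A q N d, OF c20(1) a(3) a(2)] by blast
        next
          case (b q)
          have qN: "q dvd N" by (rule dvd_trans[OF _ b(2)]) simp
          show ?thesis using nora_pigeon[OF b(1) qN prime_factor_lt[OF N b(1) qN] c2 d'1]
            G_C[of ?c2 A q N d, OF c20 b(2) b(3)] d by auto
        next
          case c
          have two: "prime (2::nat)" "2 dvd N" "2 < N" using c(2) N prime_factor_lt[OF N] by auto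
          obtain d2 where d2: "d' = Suc d2" using d d' by (cases d') auto
          have "nora_val N d (Suc d2) ?c2 True"
          proof (rule nv_T)
            fix i' v' assume lm': "legal_move N d ?c2 i' v'"
            let ?c3 = "?c2(i' := Some v')"
            have c3: "card (freeset d ?c3) = d2" using card_after[OF lm'] c2 d2 by simp
            have i'01: "i' \<noteq> 0" "i' \<noteq> 1" using lm' True unfolding legal_move_def by (auto split: if_splits)
            obtain d3 where d3: "d2 = Suc d3" using c d d' d2 by (cases d2) auto
            have d3e: "d3 \<ge> 1" "True = even d3" using c d d' d2 d3 by auto
            show "nora_val N d d2 ?c3 False"
            proof -
              have "\<exists>j t. legal_move N d ?c3 j t \<and> nora_val N d d3 (?c3(j := Some t)) True"
              proof (cases "i' = 2 \<or> i' = 3")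
                case True
                define X where "X = (if i' = 2 then int A + 4 * int v' else int A + 8 * int v')"
                have "\<exists>t::nat. (if i' = 2 then (t = 1 \<or> t = 2) else (t = 0 \<or> t = 1)) \<and>
                   \<not> (16::int) dvd X + (if i' = 2 then 8 else 4) * int t"
                  by (cases "i' = 2") (simp_all, presburger+)
                then obtain t where t: "if i' = 2 then (t = 1 \<or> t = 2) else (t = 0 \<or> t = 1)"
                   "\<not> (16::int) dvd X + (if i' = 2 then 8 else 4) * int t" by blast
                define j where "j = (if i' = 2 then 3 else (2::nat))"
                have lj: "legal_move N d ?c3 j t" using t i'01 True c d two(3) i0
                  unfolding legal_move_def j_def by (auto split: if_splits)
                let ?c4 = "?c3(j := Some t)"
                have c4: "card (freeset d ?c4) = d3" using card_after[OF lj] c3 d3 by simp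
                have c40: "?c4 0 = Some A" "?c4 1 = Some 0" using c20 i'01 j_def by auto
                have HH: "\<forall>a. compl ?c4 a \<longrightarrow> \<not> (16::int) dvd int A + 4 * int (a 2) + 8 * int (a 3)"
                proof (intro allI impI)
                  fix a assume "compl ?c4 a"
                  then have av: "a i' = v'" "a j = t" unfolding compl_def j_def using True by auto
                  show "\<not> (16::int) dvd int A + 4 * int (a 2) + 8 * int (a 3)"
                  proof (cases "i' = 2")
                    case True
                    then have "a 2 = v'" "a 3 = t" using av unfolding j_def by auto
                    then show ?thesis using t(2) True unfolding X_def by simp
                  next
                    case False
                    then have "i' = 3" using \<open>i' = 2 \<or> i' = 3\<close> by simp
                    then have "a 3 = v'" "a 2 = t" using av unfolding j_def by auto
                    then show ?thesis using t(2) \<open>i' = 3\<close> unfolding X_def by (simp add: algebra_simps)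
                  qed
                qed
                have "nora_val N d d3 ?c4 True"
                  using nora_pigeon[OF two c4 d3e] G_D[OF c40 c(2) c(4) d(2) HH] by blast
                then show ?thesis using lj by blast
              next
                case False
                have "\<exists>t::nat. (t = 0 \<or> t = 1) \<and> \<not> (8::int) dvd int A + 4 * int t" by presburger
                then obtain t where t: "t = 0 \<or> t = 1" "\<not> (8::int) dvd int A + 4 * int t" by blast
                have lj: "legal_move N d ?c3 2 t" using t i'01 False c d two(3) i0
                  unfolding legal_move_def by (auto split: if_splits)
                let ?c4 = "?c3(2 := Some t)"
                have c4: "card (freeset d ?c4) = d3" using card_after[OF lj] c3 d3 by simp
                have c40: "?c4 0 = Some A" "?c4 1 = Some 0" using c20 i'01 by auto
                have HH: "\<forall>a. compl ?c4 a \<longrightarrow> \<not> (16::int) dvd int A + 4 * int (a 2) + 8 * int (a 3)"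
                proof (intro allI impI)
                  fix a assume "compl ?c4 a"
                  then have "a 2 = t" unfolding compl_def by auto
                  moreover have "\<not> (16::int) dvd int A + 4 * int t + 8 * int (a 3)"
                    using t(2) by presburger
                  ultimately show "\<not> (16::int) dvd int A + 4 * int (a 2) + 8 * int (a 3)" by simp
                qed
                have "nora_val N d d3 ?c4 True"
                  using nora_pigeon[OF two c4 d3e] G_D[OF c40 c(2) c(4) d(2) HH] by blast
                then show ?thesis using lj by blast
              qed
              then show ?thesis unfolding d3 nora_val.simps if_False by blast
            qed
          qed
          then show ?thesis using d2 by blast
        qed
      qed
      then show ?thesis unfolding d' by (rule nv_F[OF l2[unfolded d']])
    qed
  qed
  then show ?thesis unfolding nora_wins_def by simp
qed


lemma Wanda_first:
  assumes N1: "N > 1" and d: "d \<ge> 3" and A: "0 < A" "A < N" and u0: "u0 < N"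
    and H0: "\<forall>a. a 0 = A \<and> a 1 = u0 \<longrightarrow> has_root_mod N d a"
    and H1: "\<forall>v<N. (\<forall>a. a 0 = A \<and> a 1 = v \<longrightarrow> has_root_mod N d a) \<or>
               (\<exists>w<N. \<forall>a. a 0 = A \<and> a 1 = v \<and> a 2 = w \<longrightarrow> has_root_mod N d a)"
  shows "wanda_wins N d True"
proof -
  let ?c1 = "((\<lambda>_. None)(0 := Some A)) :: st"
  have l1: "legal_move N d (\<lambda>_. None) 0 A" using A unfolding legal_move_def by auto
  have c1: "card (freeset d ?c1) = d" using card_after[OF l1] card_s0 by simp
  obtain d' where d': "d = Suc d'" using d by (cases d) auto
  obtain d'' where d'': "d' = Suc d''" using d d' by (cases d') auto
  have "wanda_val N d (Suc d') ?c1 False"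
  proof (rule wv_F)
    fix i v assume lm: "legal_move N d ?c1 i v"
    let ?c2 = "?c1(i := Some v)"
    have c2: "card (freeset d ?c2) = d'" using card_after[OF lm] c1 d' by simp
    have i0: "i \<noteq> 0" "v < N" using lm unfolding legal_move_def by (auto split: if_splits)
    show "wanda_val N d d' ?c2 True"
    proof (cases "i = 1")
      case True
      from H1 i0(2) consider (a) "\<forall>a. a 0 = A \<and> a 1 = v \<longrightarrow> has_root_mod N d a"
        | (b) w where "w < N" "\<forall>a. a 0 = A \<and> a 1 = v \<and> a 2 = w \<longrightarrow> has_root_mod N d a" by blast
      then show ?thesis
      proof cases
        case a
        have "\<forall>a. compl ?c2 a \<longrightarrow> has_root_mod N d a"
          using a True unfolding compl_def by auto
        then show ?thesis using wanda_by_compl[OF N1 c2] by blast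
      next
        case b
        have l2: "legal_move N d ?c2 2 w" using b True d unfolding legal_move_def by auto
        let ?c3 = "?c2(2 := Some w)"
        have c3: "card (freeset d ?c3) = d''" using card_after[OF l2] c2 d'' by simp
        have "\<forall>a. compl ?c3 a \<longrightarrow> has_root_mod N d a"
          using b True unfolding compl_def by auto
        then have "wanda_val N d d'' ?c3 False" using wanda_by_compl[OF N1 c3] by blast
        then show ?thesis unfolding d'' by (rule wv_T[OF l2])
      qed
    next
      case False
      have l2: "legal_move N d ?c2 1 u0" using False i0 u0 d unfolding legal_move_def by auto
      let ?c3 = "?c2(1 := Some u0)"
      have c3: "card (freeset d ?c3) = d''" using card_after[OF l2] c2 d'' by simp
      have "\<forall>a. compl ?c3 a \<longrightarrow> has_root_mod N d a"
        using H0 False i0 unfolding compl_def by auto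
      then have "wanda_val N d d'' ?c3 False" using wanda_by_compl[OF N1 c3] by blast
      then show ?thesis unfolding d'' by (rule wv_T[OF l2])
    qed
  qed
  then show ?thesis unfolding wanda_wins_def d' Suc_eq_plus1[symmetric] by (rule wv_T[OF l1[unfolded d']])
qed

lemma Wanda_d1:
  assumes "N > 1"
  shows "wanda_wins N 1 True"
proof -
  let ?c1 = "((\<lambda>_. None)(1 := Some 1)) :: st"
  have l1: "legal_move N 1 (\<lambda>_. None) 1 1" using assms unfolding legal_move_def by auto
  have c1: "card (freeset 1 ?c1) = 1" using card_after[OF l1] card_s0 by simp
  have "\<forall>a. compl ?c1 a \<longrightarrow> has_root_mod N 1 a"
  proof (intro allI impI)
    fix a assume "compl ?c1 a"
    then have a1: "a 1 = 1" unfolding compl_def by auto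
    have "evi a 1 (- int (a 0)) = 0" unfolding evi_def using a1 by simp
    then have "int N dvd evi a 1 (- int (a 0))" by simp
    moreover have "N > 0" using assms by simp
    ultimately show "has_root_mod N 1 a" using has_root_mod_iff[of N 1 a] by blast
  qed
  then have "wanda_val N 1 1 ?c1 False" using wanda_by_compl[OF assms c1] by blast
  then show ?thesis unfolding wanda_wins_def Suc_eq_plus1[symmetric] by (rule wv_T[OF l1])
qed

lemma solve_int:
  fixes B m R :: int
  assumes "coprime B m"
  shows "\<exists>t. m dvd R + t * B"
proof -
  obtain u v where uv: "u * B + v * m = gcd B m" using bezout_int by blast
  then have "u * B + v * m = 1" using assms by simp
  have "R + (- R * u) * B - m * (R * v) = R * (1 - (u * B + v * m))" by (simp add: algebra_simps)
  also have "\<dots> = 0" using \<open>u * B + v * m = 1\<close> by simp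
  finally have "R + (- R * u) * B = m * (R * v)" by simp
  then show ?thesis by (intro exI[of _ "- R * u"]) simp
qed

lemma solve_nat:
  fixes M m :: nat and R :: int
  assumes "coprime M m" "m > 0"
  shows "\<exists>w<m. int m dvd R + int w * int M"
proof -
  have "coprime (int M) (int m)" using assms by simp
  then obtain t where t: "int m dvd R + t * int M" using solve_int by blast
  define w where "w = nat (t mod int m)"
  have wm: "int w = t mod int m" unfolding w_def using assms by simp
  have "int w < int m" using wm assms(2) by simp
  then have wm': "w < m" by simp
  have "[R + t * int M = R + int w * int M] (mod int m)"
    unfolding wm by (intro cong_add cong_mult cong_refl) (simp add: cong_def)
  then have "int m dvd R + int w * int M" using t cong_dvd_iff by blast
  then show ?thesis using wm' by blast
qed

lemma root_by:
  assumes "N > 0" "m \<le> Suc d" "int N dvd X ^ m" "int N dvd (\<Sum>i<m. int (a i) * X ^ i)"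
  shows "has_root_mod N d a"
proof -
  have "[evi a d X = (\<Sum>i<m. int (a i) * X ^ i)] (mod int N)" using assms(2,3) by (rule evi_mod)
  then have "int N dvd evi a d X" using assms(4) by (simp add: cong_dvd_iff)
  then show ?thesis using has_root_mod_iff[OF assms(1)] by blast
qed

lemma sum2: "(\<Sum>i<2. g i) = g 0 + g 1" for g :: "nat \<Rightarrow> int"
  by (simp add: numeral_2_eq_2)
lemma sum3: "(\<Sum>i<3. g i) = g 0 + g 1 + g 2" for g :: "nat \<Rightarrow> int"
  by (simp add: numeral_3_eq_3 numeral_2_eq_2)
lemma sum4: "(\<Sum>i<4. g i) = g 0 + g 1 + g 2 + g 3" for g :: "nat \<Rightarrow> int"
  by (simp add: numeral_eq_Suc)

lemma hensel:
  fixes ka kb kc kd yz :: int and p :: nat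
  defines "Q \<equiv> \<lambda>y. ka + kb * y + kc * y^2 + kd * y^3"
  defines "Q' \<equiv> \<lambda>y. kb + 2 * kc * y + 3 * kd * y^2"
  assumes p: "prime p" and K: "K \<ge> 1" and r: "int p dvd Q yz" and nd: "\<not> int p dvd Q' yz"
  shows "\<exists>y. int p ^ K dvd Q y \<and> [y = yz] (mod int p)"
  using K
proof (induction K)
  case 0
  then show ?case by simp
next
  case (Suc K)
  show ?case
  proof (cases "K = 0")
    case True
    then show ?thesis using r by auto
  next
    case False
    then obtain y where y: "int p ^ K dvd Q y" "[y = yz] (mod int p)" using Suc.IH by auto
    have "[Q' y = Q' yz] (mod int p)" unfolding Q'_def using y(2)
      by (intro cong_add cong_mult cong_pow cong_refl) 
    then have nd': "\<not> int p dvd Q' y" using nd by (simp add: cong_dvd_iff)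
    have pi: "prime (int p)" using p by simp
    have "coprime (Q' y) (int p)" using nd' pi
      by (simp add: coprime_commute prime_imp_coprime)
    obtain r where r: "Q y = int p ^ K * r" using y(1) by (elim dvdE)
    obtain t where t: "int p dvd r + t * Q' y" using solve_int[OF \<open>coprime (Q' y) (int p)\<close>] by blast
    define u where "u = int p ^ K * t"
    have eq: "Q (y + u) = Q y + u * Q' y + u^2 * (kc + kd * (3 * y + u))"
      unfolding Q_def Q'_def by (simp add: algebra_simps power2_eq_square power3_eq_cube)
    also have "\<dots> = int p ^ K * (r + t * Q' y) + int p ^ (2 * K) * (t^2 * (kc + kd * (3 * y + u)))"
      unfolding u_def r by (simp add: algebra_simps power_mult_distrib power_mult[symmetric] mult_2 power_add)
    finally have eq2: "Q (y + u) = \<dots>" .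
    have "int p ^ Suc K dvd int p ^ K * (r + t * Q' y)" using t by (simp add: mult_dvd_mono)
    moreover have "int p ^ Suc K dvd int p ^ (2 * K)" using False by (intro le_imp_power_dvd) auto
    ultimately have "int p ^ Suc K dvd Q (y + u)" unfolding eq2 by (intro dvd_add) (auto intro: dvd_mult2)
    moreover have "[y + u = yz] (mod int p)"
    proof -
      have "[u = 0] (mod int p)" unfolding u_def using False by (simp add: cong_0_iff)
      then have "[y + u = yz + 0] (mod int p)" using y(2) by (intro cong_add)
      then show ?thesis by simp
    qed
    ultimately show ?thesis by blast
  qed
qed


lemma pw: "a + b = c \<Longrightarrow> (x::int)^a * x^b = x^c"
  by (simp add: power_add[symmetric])
lemma pw2: "a + b = c + e \<Longrightarrow> (x::int)^a * x^b = x^c * x^e"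
  by (simp add: power_add[symmetric])
lemma pw3: "a + b + c = e + f \<Longrightarrow> (x::int)^a * x^b * x^c = x^e * x^f"
  by (simp add: power_add[symmetric])

lemma S1:
  fixes p q r M N d :: nat
  assumes p: "prime p" and pM: "\<not> p dvd M" and N: "N = p^(3*r+3+2*q) * M"
    and d: "d \<ge> 2"
  defines "A \<equiv> p^(3*r+2+2*q) * M"
  shows "\<forall>a. a 0 = A \<and> a 1 = p - 1 \<longrightarrow> has_root_mod N d a"
    and "\<forall>v<N. (\<forall>a. a 0 = A \<and> a 1 = v \<longrightarrow> has_root_mod N d a) \<or>
               (\<exists>w<N. \<forall>a. a 0 = A \<and> a 1 = v \<and> a 2 = w \<longrightarrow> has_root_mod N d a)"
proof -
  define P where "P = int p"
  define eN where "eN = 3*r+3+2*q"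
  define eA where "eA = 3*r+2+2*q"
  have M0: "M > 0" using pM by (cases M) auto
  have p1: "p > 1" using p prime_gt_1_nat by blast
  have N0: "N > 0" using N M0 p1 by simp
  have e3: "eN = Suc eA" unfolding eN_def eA_def by simp
  have NA: "N = p * A" unfolding N A_def eN_def[symmetric] eA_def[symmetric] e3 power_Suc by (simp only: mult.assoc)
  have Ni: "int N = P^eN * int M" unfolding N P_def eN_def by simp
  have Ai: "int A = P^eA * int M" unfolding A_def P_def eA_def by simp
  show "\<forall>a. a 0 = A \<and> a 1 = p - 1 \<longrightarrow> has_root_mod N d a"
  proof (intro allI impI)
    fix a :: "nat \<Rightarrow> nat" assume a: "a 0 = A \<and> a 1 = p - 1"
    define e2 where "e2 = 3*r+1+2*q"
    have "int A ^ 2 = int N * (P^e2 * int M)"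
    proof -
      have "int A ^ 2 = (P^eA * P^eA) * (int M * int M)"
        unfolding Ai by (simp add: power2_eq_square algebra_simps)
      also have "P^eA * P^eA = P^eN * P^e2"
        by (rule pw2) (simp add: eA_def eN_def e2_def)
      finally show ?thesis unfolding Ni by (simp add: algebra_simps)
    qed
    then have "int N dvd int A ^ 2" by simp
    moreover have "(\<Sum>i<2. int (a i) * int A ^ i) = int N"
      using a p1 unfolding sum2 NA by (simp add: of_nat_diff algebra_simps)
    ultimately show "has_root_mod N d a" using N0 d by (intro root_by[of N 2 d "int A"]) auto
  qed
  show "\<forall>v<N. (\<forall>a. a 0 = A \<and> a 1 = v \<longrightarrow> has_root_mod N d a) \<or>
               (\<exists>w<N. \<forall>a. a 0 = A \<and> a 1 = v \<and> a 2 = w \<longrightarrow> has_root_mod N d a)"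
  proof (intro allI impI)
    fix v assume vN: "v < N"
    define k where "k = r + 1 + q"
    show "(\<forall>a. a 0 = A \<and> a 1 = v \<longrightarrow> has_root_mod N d a) \<or>
               (\<exists>w<N. \<forall>a. a 0 = A \<and> a 1 = v \<and> a 2 = w \<longrightarrow> has_root_mod N d a)"
    proof (cases "p^k dvd v")
      case True
      then obtain v1 where v1: "v = p^k * v1" by (elim dvdE)
      define r1 where "r1 = r + 1"
      have "coprime M p" using prime_imp_coprime[OF p pM] by (simp add: coprime_commute)
      then have cop: "coprime M (p^r1)" by simp
      obtain w where w: "w < p^r1" "int (p^r1) dvd (P^r + int v1) + int w * int M"
        using solve_nat[OF cop, of "P^r + int v1"] p1 by auto
      have wN: "w < N"
      proof -
        have "p^r1 \<le> p^eN" using p1 unfolding r1_def eN_def by (intro power_increasing) auto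
        also have "\<dots> \<le> N" unfolding N eN_def[symmetric] using M0 by simp
        finally show ?thesis using w(1) by simp
      qed
      have "\<forall>a. a 0 = A \<and> a 1 = v \<and> a 2 = w \<longrightarrow> has_root_mod N d a"
      proof (intro allI impI)
        fix a :: "nat \<Rightarrow> nat" assume a: "a 0 = A \<and> a 1 = v \<and> a 2 = w"
        define X where "X = P^k * int M"
        define eW where "eW = 2*r+2+2*q"
        have X3: "X ^ 3 = int N * (P^q * int M ^ 2)"
        proof -
          have "X ^ 3 = (P^k * P^k * P^k) * (int M * int M * int M)"
            unfolding X_def by (simp add: power3_eq_cube algebra_simps)
          also have "P^k * P^k * P^k = P^eN * P^q"
            by (rule pw3) (simp add: k_def eN_def)
          finally show ?thesis unfolding Ni by (simp add: power2_eq_square algebra_simps)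
        qed
        obtain z where z: "(P^r + int v1) + int w * int M = P^r1 * z"
          using w(2) unfolding P_def by (auto elim: dvdE)
        have "(\<Sum>i<3. int (a i) * X ^ i) = P^eW * int M * ((P^r + int v1) + int w * int M)"
        proof -
          have "(\<Sum>i<3. int (a i) * X ^ i) = int A + int v * X + int w * X^2"
            using a unfolding sum3 by simp
          also have "int A = P^eW * int M * P^r"
          proof -
            have "P^eA = P^eW * P^r" by (rule pw[symmetric]) (simp add: eW_def eA_def)
            then show ?thesis unfolding Ai by (simp add: algebra_simps)
          qed
          also have "int v * X = P^eW * int M * int v1"
          proof -
            have "P^k * P^k = P^eW" by (rule pw) (simp add: eW_def k_def)
            then show ?thesis unfolding X_def v1 P_def by (simp add: algebra_simps)
          qed
          also have "int w * X^2 = P^eW * int M * (int w * int M)"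
          proof -
            have "P^k * P^k = P^eW" by (rule pw) (simp add: eW_def k_def)
            then show ?thesis unfolding X_def by (simp add: power2_eq_square algebra_simps)
          qed
          finally show ?thesis by (simp add: algebra_simps)
        qed
        also have "\<dots> = int N * z"
        proof -
          have "P^eW * P^r1 = P^eN" by (rule pw) (simp add: eW_def r1_def eN_def)
          then show ?thesis unfolding z Ni by (simp add: algebra_simps)
        qed
        finally have "int N dvd (\<Sum>i<3. int (a i) * X ^ i)" by simp
        moreover have "int N dvd X ^ 3" unfolding X3 by simp
        ultimately show "has_root_mod N d a" using N0 d by (intro root_by[of N 3 d X]) auto
      qed
      then show ?thesis using wN by blast
    next
      case False
      then have v0: "v \<noteq> 0" by (cases v) auto
      define s where "s = multiplicity p v"
      have nu: "\<not> is_unit p" using p1 by simp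
      obtain b where b: "v = p^s * b" "\<not> p dvd b"
        using multiplicity_decompose'[OF v0 nu] unfolding s_def by blast
      have "s < k" unfolding s_def using False v0 p1 by (intro multiplicity_lessI) auto
      then obtain j where j: "s + j = r + q" unfolding k_def
        by (intro that[of "r + q - s"]) simp
      have cop: "coprime b p" using prime_imp_coprime[OF p b(2)] by (simp add: coprime_commute)
      obtain t where t: "t < p" "int p dvd 1 + int t * int b"
        using solve_nat[OF cop, of 1] p1 by auto
      have "\<forall>a. a 0 = A \<and> a 1 = v \<longrightarrow> has_root_mod N d a"
      proof (intro allI impI)
        fix a :: "nat \<Rightarrow> nat" assume a: "a 0 = A \<and> a 1 = v"
        define eX where "eX = 2*r+2+q+j"
        define e5 where "e5 = r+1+2*j"
        define X where "X = P^eX * int M * int t"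
        have X2: "X ^ 2 = int N * (P^e5 * int M * int t ^ 2)"
        proof -
          have "X ^ 2 = (P^eX * P^eX) * (int M * int M * int t ^ 2)"
            unfolding X_def by (simp add: power2_eq_square algebra_simps)
          also have "P^eX * P^eX = P^eN * P^e5"
            by (rule pw2) (simp add: eX_def eN_def e5_def)
          finally show ?thesis unfolding Ni by (simp add: power2_eq_square algebra_simps)
        qed
        obtain z where z: "1 + int t * int b = P * z" using t(2) unfolding P_def by (auto elim: dvdE)
        have "(\<Sum>i<2. int (a i) * X ^ i) = int A * (1 + int t * int b)"
        proof -
          have "(\<Sum>i<2. int (a i) * X ^ i) = int A + int v * X"
            using a unfolding sum2 by simp
          also have "int v * X = int A * (int t * int b)"
          proof -
            have "int v * X = (P^s * P^eX) * int M * int t * int b"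
              unfolding X_def b P_def by (simp add: algebra_simps)
            also have "P^s * P^eX = P^eA" using j by (intro pw) (simp add: eX_def eA_def)
            finally show ?thesis unfolding Ai by (simp add: algebra_simps)
          qed
          finally show ?thesis by (simp add: algebra_simps)
        qed
        also have "\<dots> = int N * z" unfolding z NA P_def by simp
        finally have "int N dvd (\<Sum>i<2. int (a i) * X ^ i)" by simp
        moreover have "int N dvd X ^ 2" unfolding X2 by simp
        ultimately show "has_root_mod N d a" using N0 d by (intro root_by[of N 2 d X]) auto
      qed
      then show ?thesis by blast
    qed
  qed
qed


lemma S2:
  fixes p M N d :: nat
  assumes p: "prime p" "odd p" and pM: "\<not> p dvd M" and N: "N = p^4 * M" and d: "d \<ge> 3"
  defines "A \<equiv> p^2 * M"
  shows "\<forall>a. a 0 = A \<and> a 1 = p^2 - 1 \<longrightarrow> has_root_mod N d a"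
    and "\<forall>v<N. (\<forall>a. a 0 = A \<and> a 1 = v \<longrightarrow> has_root_mod N d a) \<or>
               (\<exists>w<N. \<forall>a. a 0 = A \<and> a 1 = v \<and> a 2 = w \<longrightarrow> has_root_mod N d a)"
proof -
  define P where "P = int p"
  have M0: "M > 0" using pM by (cases M) auto
  have p1: "p > 1" using p prime_gt_1_nat by blast
  have N0: "N > 0" using N M0 p1 by simp
  have p4: "p^4 = p^2 * (p^2::nat)" by (simp only: power_add[symmetric]) simp
  have NA: "N = p^2 * A" unfolding N A_def p4 by (simp only: mult.assoc)
  have Ni: "int N = P^4 * int M" unfolding N P_def by (simp only: of_nat_mult of_nat_power)
  have Ai: "int A = P^2 * int M" unfolding A_def P_def by (simp only: of_nat_mult of_nat_power)
  have P4: "P^4 = P^2 * P^2" by (rule pw[symmetric]) simp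
  show "\<forall>a. a 0 = A \<and> a 1 = p^2 - 1 \<longrightarrow> has_root_mod N d a"
  proof (intro allI impI)
    fix a :: "nat \<Rightarrow> nat" assume a: "a 0 = A \<and> a 1 = p^2 - 1"
    have "int A ^ 2 = int N * int M" unfolding Ai Ni P4 by (simp add: power2_eq_square algebra_simps)
    then have "int N dvd int A ^ 2" by simp
    moreover have "(\<Sum>i<2. int (a i) * int A ^ i) = int N"
    proof -
      have "p^2 \<ge> 1" using p1 by simp
      then have D: "int (p^2 - 1) = int (p^2) - 1" by (simp add: of_nat_diff)
      have "(\<Sum>i<2. int (a i) * int A ^ i) = int A + int A * int (p^2 - 1)"
        using a unfolding sum2 by (simp add: algebra_simps)
      also have "\<dots> = int A * int (p^2)" unfolding D by (simp add: algebra_simps)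
      finally show ?thesis unfolding NA by simp
    qed
    ultimately show "has_root_mod N d a" using N0 d by (intro root_by[of N 2 d "int A"]) auto
  qed
  show "\<forall>v<N. (\<forall>a. a 0 = A \<and> a 1 = v \<longrightarrow> has_root_mod N d a) \<or>
               (\<exists>w<N. \<forall>a. a 0 = A \<and> a 1 = v \<and> a 2 = w \<longrightarrow> has_root_mod N d a)"
  proof (intro allI impI)
    fix v assume vN: "v < N"
    show "(\<forall>a. a 0 = A \<and> a 1 = v \<longrightarrow> has_root_mod N d a) \<or>
               (\<exists>w<N. \<forall>a. a 0 = A \<and> a 1 = v \<and> a 2 = w \<longrightarrow> has_root_mod N d a)"
    proof (cases "p dvd v")
      case False
      have "coprime v p" using prime_imp_coprime[OF p(1) False] by (simp add: coprime_commute)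
      then have cop: "coprime v (p^2)" by simp
      obtain t where t: "t < p^2" "int (p^2) dvd 1 + int t * int v"
        using solve_nat[OF cop, of 1] p1 by auto
      have "\<forall>a. a 0 = A \<and> a 1 = v \<longrightarrow> has_root_mod N d a"
      proof (intro allI impI)
        fix a :: "nat \<Rightarrow> nat" assume a: "a 0 = A \<and> a 1 = v"
        define X where "X = int A * int t"
        have "X ^ 2 = int N * (int M * int t ^ 2)" unfolding X_def Ai Ni P4
          by (simp add: power2_eq_square algebra_simps)
        then have "int N dvd X ^ 2" by simp
        moreover have "int N dvd (\<Sum>i<2. int (a i) * X ^ i)"
        proof -
          obtain z where z: "1 + int t * int v = int (p^2) * z" using t(2) by (elim dvdE)
          have "(\<Sum>i<2. int (a i) * X ^ i) = int A * (1 + int t * int v)"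
            using a unfolding sum2 X_def by (simp add: algebra_simps)
          also have "\<dots> = int N * z" unfolding z NA by simp
          finally show ?thesis by simp
        qed
        ultimately show "has_root_mod N d a" using N0 d by (intro root_by[of N 2 d X]) auto
      qed
      then show ?thesis by blast
    next
      case True
      then obtain b where b: "v = p * b" by (elim dvdE)
      have copM: "coprime M p" using prime_imp_coprime[OF p(1) pM] by (simp add: coprime_commute)
      have pi: "prime P" unfolding P_def using p by simp
      have "\<exists>w y0. w < p \<and> P dvd 1 + int b * y0 + int w * int M * y0^2 \<and>
                    \<not> P dvd int b + 2 * int w * int M * y0"
      proof (cases "P dvd int b + 2")
        case False
        obtain w where w: "w < p" "int p dvd (1 + int b) + int w * int M"
          using solve_nat[OF copM, of "1 + int b"] p1 by auto
        have "\<not> P dvd int b + 2 * int w * int M"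
        proof
          assume h: "P dvd int b + 2 * int w * int M"
          have e: "int b + 2 = 2 * ((1 + int b) + int w * int M) - (int b + 2 * int w * int M)"
            by (simp add: algebra_simps)
          have "P dvd 2 * ((1 + int b) + int w * int M) - (int b + 2 * int w * int M)"
            using dvd_diff[OF dvd_mult[OF w(2)] h[unfolded P_def]] unfolding P_def .
          then have "P dvd int b + 2" unfolding e .
          then show False using False by simp
        qed
        then show ?thesis using w unfolding P_def by (intro exI[of _ w] exI[of _ 1]) (simp add: algebra_simps)
      next
        case True
        obtain w where w: "w < p" "int p dvd (1 - int b) + int w * int M"
          using solve_nat[OF copM, of "1 - int b"] p1 by auto
        have "\<not> P dvd int b - 2 * int w * int M"
        proof
          assume h: "P dvd int b - 2 * int w * int M"
          have e: "2 - int b = 2 * ((1 - int b) + int w * int M) + (int b - 2 * int w * int M)"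
            by (simp add: algebra_simps)
          have "P dvd 2 * ((1 - int b) + int w * int M) + (int b - 2 * int w * int M)"
            using dvd_add[OF dvd_mult[OF w(2)] h[unfolded P_def]] unfolding P_def .
          then have "P dvd 2 - int b" unfolding e .
          then have "P dvd (2 - int b) + (int b + 2)" using True by (rule dvd_add)
          then have "P dvd 2 * 2" by simp
          then have "P dvd 2" using pi prime_dvd_mult_iff by blast
          then have "int p dvd int 2" unfolding P_def by simp
          then have "p dvd 2" by (simp only: int_dvd_int_iff)
          then have "p \<le> 2" by (rule dvd_imp_le) simp
          then show False using p1 p(2) by (cases "p = 2") auto
        qed
        then show ?thesis using w unfolding P_def by (intro exI[of _ w] exI[of _ "-1"]) (simp add: algebra_simps)
      qed
      then obtain w y0 where wy: "w < p" "P dvd 1 + int b * y0 + int w * int M * y0^2"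
        "\<not> P dvd int b + 2 * int w * int M * y0" by blast
      have wN: "w < N"
      proof -
        have "p^1 \<le> p^4" using p1 by (intro power_increasing) auto
        also have "\<dots> \<le> N" unfolding N using M0 by simp
        finally show ?thesis using wy(1) by simp
      qed
      have "\<forall>a. a 0 = A \<and> a 1 = v \<and> a 2 = w \<longrightarrow> has_root_mod N d a"
      proof (intro allI impI)
        fix a :: "nat \<Rightarrow> nat" assume a: "a 0 = A \<and> a 1 = v \<and> a 2 = w"
        define c3 where "c3 = P * int (a 3) * int M ^ 2"
        define Q where "Q y = 1 + int b * y + (int w * int M) * y^2 + c3 * y^3" for y
        have q0: "int p dvd Q y0"
        proof -
          have "Q y0 = (1 + int b * y0 + int w * int M * y0^2) + P * (int (a 3) * int M ^ 2 * y0^3)"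
            unfolding Q_def c3_def by (simp add: algebra_simps)
          then show ?thesis using wy(2) unfolding P_def by simp
        qed
        have q1: "\<not> int p dvd int b + 2 * (int w * int M) * y0 + 3 * c3 * y0^2"
        proof
          assume "int p dvd int b + 2 * (int w * int M) * y0 + 3 * c3 * y0^2"
          moreover have "int b + 2 * (int w * int M) * y0 + 3 * c3 * y0^2 =
             (int b + 2 * int w * int M * y0) + P * (3 * int (a 3) * int M ^ 2 * y0^2)"
            unfolding c3_def by (simp add: algebra_simps)
          ultimately have "P dvd ((int b + 2 * int w * int M * y0) + P * (3 * int (a 3) * int M ^ 2 * y0^2))
               - P * (3 * int (a 3) * int M ^ 2 * y0^2)" unfolding P_def
            by (intro dvd_diff) auto
          then have "P dvd int b + 2 * int w * int M * y0" by simp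
          then show False using wy(3) by simp
        qed
        obtain y where y: "int p ^ 2 dvd Q y"
          using hensel[where p=p and K=2 and ka=1 and kb="int b" and kc="int w * int M" and kd=c3 and yz=y0] p(1) q0 q1
          unfolding Q_def by auto
        define X where "X = P * int M * y"
        have M4: "int M ^ 4 = int M ^ 1 * int M ^ 3" by (rule pw[symmetric]) simp
        have "X ^ 4 = int N * (int M ^ 3 * y ^ 4)" unfolding X_def Ni
          by (simp add: power_mult_distrib M4 algebra_simps)
        then have "int N dvd X ^ 4" by simp
        moreover have "int N dvd (\<Sum>i<4. int (a i) * X ^ i)"
        proof -
          obtain z where z: "Q y = int p ^ 2 * z" using y by (elim dvdE)
          have vi: "int v = P * int b" unfolding b P_def by simp
          have "(\<Sum>i<4. int (a i) * X ^ i) = P^2 * int M * Q y"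
            unfolding sum4 using a
            by (simp add: Ai vi X_def Q_def c3_def power2_eq_square power3_eq_cube algebra_simps)
          also have "\<dots> = int N * z" unfolding z Ni P4 P_def by (simp add: algebra_simps)
          finally show ?thesis by simp
        qed
        ultimately show "has_root_mod N d a" using N0 d by (intro root_by[of N 4 d X]) auto
      qed
      then show ?thesis using wN by blast
    qed
  qed
qed


lemma evi3: "evi a 3 x = int (a 0) + int (a 1) * x + int (a 2) * x^2 + int (a 3) * x^3"
  using evi_split[of 4 3 a x] by (simp add: sum4)

lemma S3:
  fixes N2 N :: nat
  assumes o: "odd N2" and N: "N = 16 * N2"
  defines "A \<equiv> 4 * N2"
  shows "\<forall>a. a 0 = A \<and> a 1 = 3 \<longrightarrow> has_root_mod N 3 a"
    and "\<forall>v<N. (\<forall>a. a 0 = A \<and> a 1 = v \<longrightarrow> has_root_mod N 3 a) \<or>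
               (\<exists>w<N. \<forall>a. a 0 = A \<and> a 1 = v \<and> a 2 = w \<longrightarrow> has_root_mod N 3 a)"
proof -
  define n where "n = int N2"
  have n0: "N2 > 0" using o by (cases N2) auto
  have N0: "N > 0" using N n0 by simp
  have Ni: "int N = 16 * n" unfolding N n_def by simp
  have Ai: "int A = 4 * n" unfolding A_def n_def by simp
  have on: "odd n" using o unfolding n_def by simp
  show "\<forall>a. a 0 = A \<and> a 1 = 3 \<longrightarrow> has_root_mod N 3 a"
  proof (intro allI impI)
    fix a :: "nat \<Rightarrow> nat" assume a: "a 0 = A \<and> a 1 = 3"
    have "(4 * n) ^ 2 = int N * n" unfolding Ni by (simp add: power2_eq_square)
    then have "int N dvd (4 * n) ^ 2" by simp
    moreover have "(\<Sum>i<2. int (a i) * (4 * n) ^ i) = int N"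
      using a Ai unfolding sum2 Ni by simp
    ultimately show "has_root_mod N 3 a" using N0 by (intro root_by[of N 2 3 "4 * n"]) auto
  qed
  show "\<forall>v<N. (\<forall>a. a 0 = A \<and> a 1 = v \<longrightarrow> has_root_mod N 3 a) \<or>
               (\<exists>w<N. \<forall>a. a 0 = A \<and> a 1 = v \<and> a 2 = w \<longrightarrow> has_root_mod N 3 a)"
  proof (intro allI impI)
    fix v assume vN: "v < N"
    show "(\<forall>a. a 0 = A \<and> a 1 = v \<longrightarrow> has_root_mod N 3 a) \<or>
               (\<exists>w<N. \<forall>a. a 0 = A \<and> a 1 = v \<and> a 2 = w \<longrightarrow> has_root_mod N 3 a)"
    proof (cases "odd v")
      case True
      have "coprime v 2" using True by (simp add: coprime_commute)
      then have cop: "coprime v (2^2)" using coprime_power_right_iff[of v 2 2] by blast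
      obtain t where t: "int (2^2) dvd 1 + int t * int v"
        using solve_nat[OF cop, of 1] by auto
      have "\<forall>a. a 0 = A \<and> a 1 = v \<longrightarrow> has_root_mod N 3 a"
      proof (intro allI impI)
        fix a :: "nat \<Rightarrow> nat" assume a: "a 0 = A \<and> a 1 = v"
        define X where "X = 4 * n * int t"
        have "X ^ 2 = int N * (n * int t ^ 2)" unfolding X_def Ni
          by (simp add: power2_eq_square algebra_simps)
        then have "int N dvd X ^ 2" by simp
        moreover have "int N dvd (\<Sum>i<2. int (a i) * X ^ i)"
        proof -
          obtain z where z: "1 + int t * int v = 4 * z" using t by (auto elim: dvdE)
          have "(\<Sum>i<2. int (a i) * X ^ i) = 4 * n * (1 + int t * int v)"
            using a Ai unfolding sum2 X_def by (simp add: algebra_simps)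
          also have "\<dots> = int N * z" unfolding z Ni by simp
          finally show ?thesis by simp
        qed
        ultimately show "has_root_mod N 3 a" using N0 by (intro root_by[of N 2 3 X]) auto
      qed
      then show ?thesis by blast
    next
      case False
      then obtain b where b: "v = 2 * b" by (auto elim: evenE)
      have vi: "int v = 2 * int b" unfolding b by simp
      show ?thesis
      proof (cases "odd b")
        case True
        have "\<forall>a. a 0 = A \<and> a 1 = v \<and> a 2 = 0 \<longrightarrow> has_root_mod N 3 a"
        proof (intro allI impI)
          fix a :: "nat \<Rightarrow> nat" assume a: "a 0 = A \<and> a 1 = v \<and> a 2 = 0"
          define c where "c = int (a 3) * n^2"
          have ob: "odd (int b)" using True by simp
          have "4 dvd 1 + int b + 2 * c \<or> 4 dvd 1 + 3 * int b + 54 * c" using ob by presburger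
          then obtain y :: int where y: "4 dvd 1 + int b * y + 2 * c * y^3" "y = 1 \<or> y = 3"
          proof (elim disjE)
            assume "4 dvd 1 + int b + 2 * c" then show ?thesis using that[of 1] by simp
          next
            assume "4 dvd 1 + 3 * int b + 54 * c" then show ?thesis using that[of 3] by (simp add: algebra_simps)
          qed
          obtain z where z: "1 + int b * y + 2 * c * y^3 = 4 * z" using y(1) by (elim dvdE)
          define X where "X = 2 * n * y"
          have n4: "n^4 = n^1 * n^3" by (rule pw[symmetric]) simp
          have "X ^ 4 = int N * (n^3 * y^4)" unfolding X_def Ni
            by (simp add: power_mult_distrib n4 algebra_simps)
          then have "int N dvd X ^ 4" by simp
          moreover have "int N dvd (\<Sum>i<4. int (a i) * X ^ i)"
          proof -
            have "(\<Sum>i<4. int (a i) * X ^ i) = 4 * n * (1 + int b * y + 2 * c * y^3)"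
              using a Ai vi unfolding sum4 X_def c_def
              by (simp add: power2_eq_square power3_eq_cube algebra_simps)
            also have "\<dots> = int N * z" unfolding z Ni by simp
            finally show ?thesis by simp
          qed
          ultimately show "has_root_mod N 3 a" using N0 by (intro root_by[of N 4 3 X]) auto
        qed
        moreover have "0 < N" using N0 .
        ultimately show ?thesis by blast
      next
        case False
        have "coprime N2 2" using o by (simp add: coprime_commute)
        then have cop: "coprime N2 (2^2)" using coprime_power_right_iff[of N2 2 2] by blast
        obtain w where w: "w < 2^2" "int (2^2) dvd (- 3 - int b) + int w * int N2"
          using solve_nat[OF cop, of "- 3 - int b"] by auto
        have wN: "w < N" using w(1) n0 unfolding N by simp
        obtain s where s: "- 3 - int b + int w * n = 4 * s" using w(2) unfolding n_def by (auto elim: dvdE)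
        obtain b' where b': "int b = 2 * b'" using False by (auto elim: evenE)
        have ow: "odd (int w)"
        proof
          assume "even (int w)"
          then obtain w' where "int w = 2 * w'" by (elim evenE)
          then have eq: "- 3 - 2 * b' + 2 * w' * n = 4 * s" using s b' by simp
          have "even (4 * s)" by simp
          then have "even (- 3 - 2 * b' + 2 * w' * n)" unfolding eq .
          then show False by simp
        qed
        have "\<forall>a. a 0 = A \<and> a 1 = v \<and> a 2 = w \<longrightarrow> has_root_mod N 3 a"
        proof (intro allI impI)
          fix a :: "nat \<Rightarrow> nat" assume a: "a 0 = A \<and> a 1 = v \<and> a 2 = w"
          show "has_root_mod N 3 a"
          proof (cases "even (a 3)")
            case True
            then obtain a' where a': "int (a 3) = 2 * a'" by (auto elim: evenE)
            define X where "X = 2 * n"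
            have "(\<Sum>i<4. int (a i) * X ^ i) = 4 * n * (1 + int b + int w * n + 2 * int (a 3) * n^2)"
              using a Ai vi unfolding sum4 X_def
              by (simp add: power2_eq_square power3_eq_cube algebra_simps)
            also have "1 + int b + int w * n + 2 * int (a 3) * n^2 = 4 * (s + 1 + b' + a' * n^2)"
              using s b' a' by (simp add: algebra_simps)
            finally have "(\<Sum>i<4. int (a i) * X ^ i) = int N * (s + 1 + b' + a' * n^2)"
              unfolding Ni by simp
            then have "int N dvd (\<Sum>i<4. int (a i) * X ^ i)" by simp
            moreover have "X ^ 4 = int N * n^3"
            proof -
              have n4: "n^4 = n^1 * n^3" by (rule pw[symmetric]) simp
              show ?thesis unfolding X_def Ni by (simp add: power_mult_distrib n4 algebra_simps)
            qed
            then have "int N dvd X ^ 4" by simp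
            ultimately show ?thesis using N0 by (intro root_by[of N 4 3 X]) auto
          next
            case False
            have oa: "odd (int (a 3))" using False by simp
            define Q where "Q y = 4 * n + (int v * n) * y + (int w * n^2) * y^2 + (int (a 3) * n^3) * y^3" for y
            have q0: "int 2 dvd Q 1" unfolding Q_def using oa ow on False vi by (simp add: even_add even_mult_iff)
            have q1: "\<not> int 2 dvd int v * n + 2 * (int w * n^2) * 1 + 3 * (int (a 3) * n^3) * 1^2"
              using oa ow on vi by (simp add: even_add even_mult_iff)
            obtain z where z: "int 2 ^ 4 dvd Q z"
              using hensel[where p=2 and K=4 and ka="4 * n" and kb="int v * n" and kc="int w * n^2"
                  and kd="int (a 3) * n^3" and yz=1] q0 q1 unfolding Q_def by auto
            define X where "X = n * z"
            have ev: "evi a 3 X = Q z" unfolding evi3 Q_def X_def using a Ai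
              by (simp add: power_mult_distrib algebra_simps)
            have d16: "16 dvd Q z" using z by simp
            have dn: "n dvd Q z" unfolding Q_def by (simp add: power2_eq_square power3_eq_cube)
            have "coprime (2::int) n" using on by simp
            then have "coprime (16::int) n" using coprime_power_left_iff[of 2 4 n] by simp
            then have "16 * n dvd Q z" using d16 dn by (intro divides_mult)
            then have "int N dvd evi a 3 X" unfolding ev Ni .
            then show ?thesis using has_root_mod_iff[OF N0] by blast
          qed
        qed
        then show ?thesis using wN by blast
      qed
    qed
  qed
qed


lemma cube_free_mult_le2:
  fixes N q :: nat
  assumes "cube_free N" "prime q" "N \<noteq> 0"
  shows "multiplicity q N \<le> 2"
proof (rule ccontr)
  assume "\<not> multiplicity q N \<le> 2"
  then have "3 \<le> multiplicity q N" by simp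
  then have "q ^ 3 dvd N" by (rule multiplicity_dvd')
  then have "q = 1" using assms(1) unfolding cube_free_def by blast
  then show False using assms(2) by simp
qed

lemma dvd_from_local:
  fixes N A :: nat
  assumes N0: "N \<noteq> 0" and cf: "cube_free N"
    and h1: "\<And>q. prime q \<Longrightarrow> q dvd N \<Longrightarrow> q dvd A"
    and h2: "\<And>q. prime q \<Longrightarrow> q^2 dvd N \<Longrightarrow> q^2 dvd A"
  shows "N dvd A"
proof (cases "A = 0")
  case True
  then show ?thesis by simp
next
  case False
  show ?thesis
  proof (rule multiplicity_le_imp_dvd[OF N0])
    fix q :: nat assume q: "prime q"
    have nu: "\<not> is_unit q" using not_prime_unit[of q] q by blast
    have le2: "multiplicity q N \<le> 2" using cube_free_mult_le2[OF cf q N0] .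
    consider "multiplicity q N = 0" | "multiplicity q N = 1" | "multiplicity q N = 2" using le2 by linarith
    then show "multiplicity q N \<le> multiplicity q A"
    proof cases
      case 1
      then show ?thesis by simp
    next
      case 2
      then have "q ^ 1 dvd N" using multiplicity_dvd'[of 1 q N] by simp
      then have "q ^ 1 dvd A" using h1[OF q] by simp
      then have "1 \<le> multiplicity q A" using multiplicity_geI[OF False nu] by blast
      then show ?thesis using 2 by simp
    next
      case 3
      then have "q ^ 2 dvd N" using multiplicity_dvd'[of 2 q N] by simp
      then have "q ^ 2 dvd A" using h2[OF q] by simp
      then have "2 \<le> multiplicity q A" using multiplicity_geI[OF False nu] by blast
      then show ?thesis using 3 by simp
    qed
  qed
qed

lemma E_wins:
  fixes N d :: nat
  assumes N: "N > 1" "\<not> prime N" and d: "odd d" "d \<ge> 3" and ncf: "\<not> cube_free N"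
    and nD: "\<not> (d > 3 \<and> (\<exists>N2. odd N2 \<and> cube_free N2 \<and> N = 16 * N2))"
  shows "wanda_wins N d True"
proof -
  have N0: "N \<noteq> 0" using N by simp
  have key: "wanda_wins N d True" if p: "prime p" and good: "multiplicity p N = 3 \<or> multiplicity p N \<ge> 5 \<or>
      (odd p \<and> multiplicity p N = 4)" for p
  proof -
    define e where "e = multiplicity p N"
    have nu: "\<not> is_unit p" using not_prime_unit[of p] p by blast
    obtain M where M: "N = p ^ e * M" "\<not> p dvd M"
      using multiplicity_decompose'[OF N0 nu] unfolding e_def by blast
    have M0: "M > 0" using M(2) by (cases M) auto
    have p1: "p > 1" using p prime_gt_1_nat by blast
    show ?thesis
    proof (cases "e = 3 \<or> e \<ge> 5")
      case True
      then have "\<exists>r q. e = 3*r+3+2*q" by presburger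
      then obtain r q where rq: "e = 3*r+3+2*q" by blast
      define A where "A = p^(3*r+2+2*q) * M"
      have e3': "3*r+3+2*q = Suc (3*r+2+2*q)" by simp
      have NA: "N = p * A" unfolding A_def M(1) rq e3' power_Suc by (simp only: mult.assoc)
      have A0: "0 < A" unfolding A_def using M0 p1 by simp
      have AN: "A < N" unfolding NA using A0 p1 by simp
      have "p \<le> N" unfolding NA using A0 by simp
      then have u0: "p - 1 < N" using p1 by linarith
      note s1 = S1[OF p M(2) M(1)[unfolded rq], of d]
      show ?thesis
        using Wanda_first[OF N(1) d(2) A0 AN u0] s1 d unfolding A_def by auto
    next
      case False
      then have e4: "e = 4" "odd p" using good unfolding e_def by auto
      define A where "A = p^2 * M"
      have p4: "p^4 = p^2 * (p^2::nat)" by (simp only: power_add[symmetric]) simp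
      have NA: "N = p^2 * A" unfolding A_def M(1) e4 p4 by (simp only: mult.assoc)
      have A0: "0 < A" unfolding A_def using M0 p1 by simp
      have pp: "1 < p^2" using one_less_power[of p 2] p1 by simp
      have AN: "A < N" unfolding NA using A0 pp by simp
      have "p^2 \<le> N" unfolding NA using A0 by simp
      moreover have "p^2 > 0" using p1 by simp
      ultimately have u0: "p^2 - 1 < N" by linarith
      note s2 = S2[OF p e4(2) M(2) M(1)[unfolded e4] d(2)]
      show ?thesis
        using Wanda_first[OF N(1) d(2) A0 AN u0] s2 unfolding A_def by auto
    qed
  qed
  obtain m where m: "m ^ 3 dvd N" "m \<noteq> 1" using ncf unfolding cube_free_def by blast
  have m0: "m \<noteq> 0" using m N0 by auto
  obtain p where p: "prime p" "p dvd m" using m(2) prime_factor_nat by blast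
  have "p ^ 3 dvd N" using p(2) m(1) by (meson dvd_trans dvd_power_same)
  moreover have nup: "\<not> is_unit p" using not_prime_unit[of p] p(1) by blast
  ultimately have e3: "multiplicity p N \<ge> 3" using multiplicity_geI[OF N0] by blast
  show ?thesis
  proof (cases "\<exists>q. prime q \<and> (multiplicity q N = 3 \<or> multiplicity q N \<ge> 5 \<or> (odd q \<and> multiplicity q N = 4))")
    case True
    then show ?thesis using key by blast
  next
    case False
    then have nq: "\<And>q. prime q \<Longrightarrow> \<not> (multiplicity q N = 3 \<or> multiplicity q N \<ge> 5 \<or> (odd q \<and> multiplicity q N = 4))"
      by blast
    have m4: "multiplicity p N = 4" using nq[OF p(1)] e3 by linarith
    have "even p" using nq[OF p(1)] m4 by blast
    then have "2 dvd p" by simp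
    then have p2: "p = 2" using p(1) unfolding prime_nat_iff by auto
    have nu: "\<not> is_unit (2::nat)" by simp
    obtain M where M0: "N = 2 ^ multiplicity 2 N * M" "\<not> 2 dvd M"
      using multiplicity_decompose'[OF N0 nu] by blast
    have M: "N = 2 ^ 4 * M" "\<not> 2 dvd M" using M0 m4 p2 by simp_all
    have oM: "odd M" using M(2) by simp
    have N16: "N = 16 * M" using M(1) by simp
    have cfM: "cube_free M"
      unfolding cube_free_def
    proof (intro allI impI)
      fix m' assume m': "m' ^ 3 dvd M"
      show "m' = 1"
      proof (rule ccontr)
        assume "m' \<noteq> 1"
        then obtain q where q: "prime q" "q dvd m'" using prime_factor_nat by blast
        have qM: "q ^ 3 dvd M" using q(2) m' by (meson dvd_trans dvd_power_same)
        then have "q ^ 3 dvd N" unfolding N16 by (rule dvd_mult)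
        moreover have nuq: "\<not> is_unit q" using not_prime_unit[of q] q(1) by blast
        ultimately have qe: "multiplicity q N \<ge> 3" using multiplicity_geI[OF N0] by blast
        have "q dvd M" using qM by (rule dvd_trans[rotated]) simp
        then have "odd q" using oM by (auto elim: evenE dest: dvd_trans[rotated])
        then show False using nq[OF q(1)] qe by linarith
      qed
    qed
    have d3: "d = 3" using nD oM cfM N16 d by auto
    have A0: "0 < 4 * M" "4 * M < N" using oM N16 by (cases M; simp)+
    have u0: "3 < N" using oM N16 by (cases M) auto
    show ?thesis unfolding d3
      using Wanda_first[OF N(1) _ A0 u0] S3[OF oM N16] by simp
  qed
qed


theorem theorem1:
  fixes N d :: nat
  assumes "d \<ge> 1" and "N > 1" and "\<not> prime N"
  shows "((even d \<or> (d > 1 \<and> cube_free N) \<or>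
            (d > 3 \<and> (\<exists>N2. odd N2 \<and> cube_free N2 \<and> N = 16 * N2)))
           \<longrightarrow> (\<forall>wf. last_player_wins N d wf)) \<and>
         (\<not> (even d \<or> (d > 1 \<and> cube_free N) \<or>
            (d > 3 \<and> (\<exists>N2. odd N2 \<and> cube_free N2 \<and> N = 16 * N2)))
           \<longrightarrow> (\<forall>wf. wanda_wins N d wf))"
proof -
  have N1: "N > 1" using assms(2) .
  have N0: "N \<noteq> 0" using N1 by simp
  have "N \<noteq> 1" using N1 by simp
  then obtain p where p: "prime p" "p dvd N" using prime_factor_nat by blast
  have pN: "p < N" using prime_factor_lt[OF N1 assms(3) p] .
  have P1: "\<forall>wf. last_player_wins N d wf"
    if C: "even d \<or> (d > 1 \<and> cube_free N) \<or> (d > 3 \<and> (\<exists>N2. odd N2 \<and> cube_free N2 \<and> N = 16 * N2))"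
  proof
    fix wf
    show "last_player_wins N d wf"
    proof (cases "wf = even d")
      case True
      show ?thesis
      proof (cases "even d")
        case True
        then have "d \<ge> 2" using assms(1) by presburger
        then show ?thesis unfolding last_player_wins_def using WL_even[OF N1 True] \<open>wf = even d\<close> True by simp
      next
        case False
        then show ?thesis unfolding last_player_wins_def using WL_odd[OF N1 False] \<open>wf = even d\<close> by simp
      qed
    next
      case False
      show ?thesis
      proof (cases "even d")
        case True
        then have "d \<ge> 2" using assms(1) by presburger
        then have "nora_wins N d False" using Nora_B[OF p pN True] by simp
        then show ?thesis unfolding last_player_wins_def using False True by simp
      next
        case False
        have od: "odd d" using False .
        have C': "(d > 1 \<and> cube_free N) \<or> (d > 3 \<and> (\<exists>N2. odd N2 \<and> cube_free N2 \<and> N = 16 * N2))"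
          using C False by blast
        have "d > 1" using C' by auto
        then have d3: "d \<ge> 3" using od by presburger
        have H: "(\<exists>q. prime q \<and> q dvd N \<and> \<not> q dvd A) \<or>
              (\<exists>q. prime q \<and> q^2 dvd N \<and> \<not> q^2 dvd A) \<or>
              (d \<ge> 5 \<and> 16 dvd N \<and> 4 dvd A \<and> \<not> 16 dvd A)" if A: "0 < A" "A < N" for A
        proof (rule ccontr)
          assume "\<not> ?thesis"
          then have h1: "\<And>q. prime q \<Longrightarrow> q dvd N \<Longrightarrow> q dvd A"
            and h2: "\<And>q. prime q \<Longrightarrow> q^2 dvd N \<Longrightarrow> q^2 dvd A"
            and h3: "\<not> (d \<ge> 5 \<and> 16 dvd N \<and> 4 dvd A \<and> \<not> 16 dvd A)" by blast+
          have nd: "\<not> N dvd A" using A by (auto dest: dvd_imp_le)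
          from C' show False
          proof
            assume "d > 1 \<and> cube_free N"
            then have "N dvd A" using dvd_from_local[OF N0 _ h1 h2] by blast
            then show False using nd by blast
          next
            assume "d > 3 \<and> (\<exists>N2. odd N2 \<and> cube_free N2 \<and> N = 16 * N2)"
            then obtain N2 where N2: "d > 3" "odd N2" "cube_free N2" "N = 16 * N2" by blast
            have N20: "N2 \<noteq> 0" using N2(2) by (cases N2) auto
            have "N2 dvd A"
            proof (rule dvd_from_local[OF N20 N2(3)])
              fix q :: nat assume q: "prime q" "q dvd N2"
              then show "q dvd A" using h1[OF q(1)] N2(4) by (simp add: dvd_mult)
            next
              fix q :: nat assume q: "prime q" "q^2 dvd N2"
              then show "q^2 dvd A" using h2[OF q(1)] N2(4) by (simp add: dvd_mult)
            qed
            moreover have "2^2 dvd A" using h2[of 2] N2(4) by simp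
            moreover have "d \<ge> 5" using N2(1) od by presburger
            ultimately have "16 dvd A" using h3 N2(4) by simp
            moreover have "coprime (16::nat) N2"
            proof -
              have "coprime (2::nat) N2" using N2(2) by simp
              then show ?thesis using coprime_power_left_iff[of 2 4 N2] by simp
            qed
            ultimately have "16 * N2 dvd A" using \<open>N2 dvd A\<close> by (intro divides_mult)
            then show False using nd N2(4) by simp
          qed
        qed
        have "nora_wins N d True" using Nora_CD[OF N1 assms(3) od d3] H by blast
        then show ?thesis unfolding last_player_wins_def using \<open>wf \<noteq> even d\<close> od by simp
      qed
    qed
  qed
  have P2: "\<forall>wf. wanda_wins N d wf"
    if C: "\<not> (even d \<or> (d > 1 \<and> cube_free N) \<or> (d > 3 \<and> (\<exists>N2. odd N2 \<and> cube_free N2 \<and> N = 16 * N2)))"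
  proof
    fix wf
    have od: "odd d" using C by blast
    show "wanda_wins N d wf"
    proof (cases wf)
      case False
      then show ?thesis using WL_odd[OF N1 od] by simp
    next
      case True
      show ?thesis
      proof (cases "d = 1")
        case True
        then show ?thesis using Wanda_d1[OF N1] \<open>wf\<close> by simp
      next
        case False
        then have d3: "d \<ge> 3" using od assms(1) by presburger
        have ncf: "\<not> cube_free N" using C d3 by auto
        have nD: "\<not> (d > 3 \<and> (\<exists>N2. odd N2 \<and> cube_free N2 \<and> N = 16 * N2))" using C by blast
        show ?thesis using E_wins[OF N1 assms(3) od d3 ncf nD] \<open>wf\<close> by simp
      qed
    qed
  qed
  show ?thesis using P1 P2 by blast
qed

end
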